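(* Let $a\geq b\geq 1$ be integers with $a+b=n$, let $2\le k\le n$, and let $Q$ be the probability distribution on $S_n$ which is uniform on the set of $k$-cycles. Let $X$ be the set of tabloids of shape $\lambda=(a,b)$, i.e. ordered pairs $(A,B)$ of disjoint subsets of $\{1,\dots,n\}$ with $|A|=a$, $|B|=b$, $A\cup B=\{1,\dots,n\}$, with the natural action of $S_n$. For a positive integer $N$ let $q^{(N)}:=\sum_{g\in S_n}Q^N(g)e_g$, where $Q^N$ is the $N$-fold convolution of $Q$. Then for every $x_0\in X$, \[\|q^{(N)}\cdot e_{x_0}-\overline{u}_X\|^2_{\rm TV}\le\frac{1}{4}\sum_{t=1}^b \frac{\left(\left[\binom{n-k}{n-t}-\binom{n-k}{n+1-t}\right] + \left[\binom{n-k}{t}-\binom{n-k}{t-1}\right]\right)^{2N}}{\left(\binom{n}{t}-\binom{n}{t-1}\right)^{2N-1}}.\]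
   Context: Convolution: $(P\ast R)(h)=\sum_gP(hg^{-1})R(g)$. $\mathbb{C}X$ has basis $\{e_x:x\in X\}$ and is a module over the group algebra $\mathbb{C}S_n$ via $e_g\cdot e_x:=e_{g(x)}$. $\|h\|_{\rm TV}:=\frac12\sum_x|h(x)|$ for $h=\sum_xh(x)e_x$, and $\overline{u}_X:=\frac1{|X|}\sum_xe_x$. Binomial coefficients $\binom{m}{j}$ are $0$ if $j<0$ or $j>m$. *)

theory Defs
  imports "HOL-Analysis.Analysis" "HOL-Combinatorics.Combinatorics"
begin

definition Sym :: "nat \<Rightarrow> (nat \<Rightarrow> nat) set" where
  "Sym n = {p. p permutes {1..n}}"

definition kcycles :: "nat \<Rightarrow> nat \<Rightarrow> (nat \<Rightarrow> nat) set" where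
  "kcycles n k = {p. \<exists>cs. distinct cs \<and> length cs = k \<and> set cs \<subseteq> {1..n} \<and> p = cycle_of_list cs}"

definition Qcyc :: "nat \<Rightarrow> nat \<Rightarrow> (nat \<Rightarrow> nat) \<Rightarrow> real" where
  "Qcyc n k g = (if g \<in> kcycles n k then 1 / real (card (kcycles n k)) else 0)"

definition conv :: "nat \<Rightarrow> ((nat \<Rightarrow> nat) \<Rightarrow> real) \<Rightarrow> ((nat \<Rightarrow> nat) \<Rightarrow> real) \<Rightarrow> (nat \<Rightarrow> nat) \<Rightarrow> real" where
  "conv n P R h = (\<Sum>g\<in>Sym n. P (h \<circ> inv g) * R g)"

fun conv_pow :: "nat \<Rightarrow> ((nat \<Rightarrow> nat) \<Rightarrow> real) \<Rightarrow> nat \<Rightarrow> (nat \<Rightarrow> nat) \<Rightarrow> real" where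
  "conv_pow n P 0 = (\<lambda>g. if g = id then 1 else 0)"
| "conv_pow n P (Suc N) = conv n P (conv_pow n P N)"

definition tabloids :: "nat \<Rightarrow> nat \<Rightarrow> nat \<Rightarrow> (nat set \<times> nat set) set" where
  "tabloids n a b = {(A, B). A \<inter> B = {} \<and> card A = a \<and> card B = b \<and> A \<union> B = {1..n}}"

definition act :: "(nat \<Rightarrow> nat) \<Rightarrow> nat set \<times> nat set \<Rightarrow> nat set \<times> nat set" where
  "act g x = (g ` fst x, g ` snd x)"

text \<open>Coefficients of q \<cdot> e_{x0} in the basis e_x of CX, where q = \<Sum>_g P(g) e_g.\<close>
definition act_vec :: "nat \<Rightarrow> ((nat \<Rightarrow> nat) \<Rightarrow> real) \<Rightarrow> nat set \<times> nat set \<Rightarrow> nat set \<times> nat set \<Rightarrow> real" where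
  "act_vec n P x0 x = (\<Sum>g\<in>{g\<in>Sym n. act g x0 = x}. P g)"

definition tv_unif :: "'x set \<Rightarrow> ('x \<Rightarrow> real) \<Rightarrow> real" where
  "tv_unif X h = (1/2) * (\<Sum>x\<in>X. \<bar>h x - 1 / real (card X)\<bar>)"

end

theory Submission
  imports Defs "Jordan_Normal_Form.Determinant"
begin

no_notation m_inv (\<open>(\<open>open_block notation=\<open>prefix inv\<close>\<close>inv\<index> _)\<close> [81] 80)


definition mm :: "'a set \<Rightarrow> ('a \<Rightarrow> 'a \<Rightarrow> real) \<Rightarrow> ('a \<Rightarrow> 'a \<Rightarrow> real) \<Rightarrow> 'a \<Rightarrow> 'a \<Rightarrow> real" where
  "mm L A B = (\<lambda>x z. \<Sum>y\<in>L. A x y * B y z)"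

definition trc :: "'a set \<Rightarrow> ('a \<Rightarrow> 'a \<Rightarrow> real) \<Rightarrow> real" where
  "trc L A = (\<Sum>x\<in>L. A x x)"

definition dl :: "'a \<Rightarrow> 'a \<Rightarrow> real" where
  "dl x y = (if x = y then 1 else 0)"

fun mpow :: "'a set \<Rightarrow> ('a \<Rightarrow> 'a \<Rightarrow> real) \<Rightarrow> nat \<Rightarrow> 'a \<Rightarrow> 'a \<Rightarrow> real" where
  "mpow L A 0 = dl"
| "mpow L A (Suc m) = mm L (mpow L A m) A"

lemma mm_assoc:
  assumes "finite L1" "finite L2"
  shows "mm L2 (mm L1 A B) C = mm L1 A (mm L2 B C)"
  unfolding mm_def
  by (auto simp: fun_eq_iff sum_distrib_left sum_distrib_right mult.assoc intro: sum.swap)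

lemma trc_mm_comm:
  assumes "finite L1" "finite L2"
  shows "trc L1 (mm L2 A B) = trc L2 (mm L1 B A)"
  unfolding mm_def trc_def
  by (subst sum.swap) (simp add: mult.commute)

lemma dl_sum: "finite L \<Longrightarrow> x \<in> L \<Longrightarrow> (\<Sum>y\<in>L. dl x y * g y) = g x"
proof -
  assume "finite L" "x \<in> L"
  have "(\<Sum>y\<in>L. dl x y * g y) = (\<Sum>y\<in>L. if x = y then g y else 0)"
    by (rule sum.cong) (auto simp: dl_def)
  then show ?thesis using \<open>finite L\<close> \<open>x \<in> L\<close> by simp
qed

lemma dl_sum': "finite L \<Longrightarrow> z \<in> L \<Longrightarrow> (\<Sum>y\<in>L. g y * dl y z) = g z"
proof -
  assume "finite L" "z \<in> L"
  have "(\<Sum>y\<in>L. g y * dl y z) = (\<Sum>y\<in>L. if z = y then g y else 0)"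
    by (rule sum.cong) (auto simp: dl_def)
  then show ?thesis using \<open>finite L\<close> \<open>z \<in> L\<close> by simp
qed

lemma mm_dl_left: "finite L \<Longrightarrow> x \<in> L \<Longrightarrow> mm L dl A x z = A x z"
  unfolding mm_def by (rule dl_sum)

lemma mm_dl_right: "finite L \<Longrightarrow> z \<in> L \<Longrightarrow> mm L A dl x z = A x z"
  unfolding mm_def by (rule dl_sum')

lemma mm_cong:
  assumes "\<And>y. y \<in> L \<Longrightarrow> A x y = A' x y" "\<And>y. y \<in> L \<Longrightarrow> B y z = B' y z"
  shows "mm L A B x z = mm L A' B' x z"
  unfolding mm_def using assms by (auto intro: sum.cong)

lemma mpow_add:
  assumes "finite L" "z \<in> L"
  shows "mpow L A (a + b) x z = mm L (mpow L A a) (mpow L A b) x z"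
  using assms(2)
proof (induction b arbitrary: z)
  case 0
  then show ?case using assms by (simp add: mm_dl_right)
next
  case (Suc b)
  have "mpow L A (a + Suc b) x z = mm L (mpow L A (a + b)) A x z" by simp
  also have "\<dots> = mm L (mm L (mpow L A a) (mpow L A b)) A x z"
    by (rule mm_cong) (use Suc in auto)
  also have "\<dots> = mm L (mpow L A a) (mpow L A (Suc b)) x z"
    using assms by (simp add: mm_assoc)
  finally show ?case .
qed

lemma mpow_intertwine:
  assumes "finite L1" "finite L2"
    and h: "\<And>x y. x \<in> L2 \<Longrightarrow> y \<in> L1 \<Longrightarrow> mm L2 A U x y = mm L1 U B x y"
  shows "x \<in> L2 \<Longrightarrow> y \<in> L1 \<Longrightarrow> mm L2 (mpow L2 A m) U x y = mm L1 U (mpow L1 B m) x y"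
proof (induction m arbitrary: x y)
  case 0
  then show ?case using assms by (simp add: mm_dl_left mm_dl_right)
next
  case (Suc m)
  have "mm L2 (mpow L2 A (Suc m)) U x y = mm L2 (mpow L2 A m) (mm L2 A U) x y"
    using assms by (simp add: mm_assoc)
  also have "\<dots> = mm L2 (mpow L2 A m) (mm L1 U B) x y"
    by (rule mm_cong) (use Suc h in auto)
  also have "\<dots> = mm L1 (mm L2 (mpow L2 A m) U) B x y"
    using assms by (simp add: mm_assoc)
  also have "\<dots> = mm L1 (mm L1 U (mpow L1 B m)) B x y"
    by (rule mm_cong) (use Suc in auto)
  also have "\<dots> = mm L1 U (mpow L1 B (Suc m)) x y"
    using assms by (simp add: mm_assoc)
  finally show ?case .
qed

lemma mpow_eigen:
  assumes "finite L" and h: "\<And>x. x \<in> L \<Longrightarrow> (\<Sum>y\<in>L. A x y * f y) = \<mu> * f x"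
  shows "x \<in> L \<Longrightarrow> (\<Sum>y\<in>L. mpow L A m x y * f y) = \<mu> ^ m * f x"
proof (induction m arbitrary: x)
  case 0
  then show ?case using assms by (simp add: dl_sum)
next
  case (Suc m)
  have "(\<Sum>y\<in>L. mpow L A (Suc m) x y * f y) = (\<Sum>y\<in>L. \<Sum>w\<in>L. mpow L A m x w * A w y * f y)"
    by (simp add: mm_def sum_distrib_right)
  also have "\<dots> = (\<Sum>w\<in>L. mpow L A m x w * (\<Sum>y\<in>L. A w y * f y))"
    by (subst sum.swap) (simp add: sum_distrib_left mult.assoc)
  also have "\<dots> = (\<Sum>w\<in>L. mpow L A m x w * (\<mu> * f w))"
    by (rule sum.cong) (auto simp: h)
  also have "\<dots> = \<mu> * (\<Sum>w\<in>L. mpow L A m x w * f w)"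
    by (simp add: sum_distrib_left algebra_simps)
  also have "\<dots> = \<mu> ^ Suc m * f x" using Suc by simp
  finally show ?case .
qed

lemma kernel_inverse:
  fixes A :: "'a \<Rightarrow> 'a \<Rightarrow> real"
  assumes fin: "finite L"
    and inj: "\<And>f. (\<And>x. x \<in> L \<Longrightarrow> (\<Sum>y\<in>L. A x y * f y) = 0) \<Longrightarrow> (\<And>y. y \<in> L \<Longrightarrow> f y = 0)"
  shows "\<exists>G. (\<forall>x\<in>L. \<forall>z\<in>L. mm L A G x z = dl x z) \<and> (\<forall>x\<in>L. \<forall>z\<in>L. mm L G A x z = dl x z)"
proof -
  define d where "d = card L"
  obtain e where e: "bij_betw e {0..<d} L"
    using ex_bij_betw_nat_finite[OF fin] unfolding d_def by blast
  define ie where "ie = inv_into {0..<d} e"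
  have ie: "bij_betw ie L {0..<d}" unfolding ie_def by (rule bij_betw_inv_into[OF e])
  have e_ie: "e (ie y) = y" if "y \<in> L" for y
    using e that unfolding ie_def by (meson bij_betw_inv_into_right)
  have ie_e: "ie (e i) = i" if "i < d" for i
    using e that unfolding ie_def by (simp add: bij_betw_inv_into_left)
  have eL: "e i \<in> L" if "i < d" for i using e that bij_betwE by fastforce
  have ieL: "ie y < d" if "y \<in> L" for y using ie that bij_betwE by fastforce
  have reidx: "(\<Sum>y\<in>L. g y) = (\<Sum>j<d. g (e j))" for g :: "'a \<Rightarrow> real"
  proof -
    have "(\<Sum>j\<in>{0..<d}. g (e j)) = (\<Sum>y\<in>L. g y)"
      by (rule sum.reindex_bij_betw[OF e])
    then show ?thesis by (simp add: atLeast0LessThan)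
  qed
  define M where "M = mat d d (\<lambda>(i, j). A (e i) (e j))"
  have M: "M \<in> carrier_mat d d" unfolding M_def by simp
  have "det M \<noteq> 0"
  proof
    assume "det M = 0"
    then obtain v where v: "v \<in> carrier_vec d" "v \<noteq> 0\<^sub>v d" "M *\<^sub>v v = 0\<^sub>v d"
      using det_0_iff_vec_prod_zero_field[OF M] by blast
    define f where "f y = v $ (ie y)" for y
    have "(\<Sum>y\<in>L. A x y * f y) = 0" if "x \<in> L" for x
    proof -
      have "(M *\<^sub>v v) $ (ie x) = 0" using v(3) ieL[OF that] by simp
      moreover have "(M *\<^sub>v v) $ (ie x) = (\<Sum>j<d. A x (e j) * v $ j)"
        using ieL[OF that] v(1) e_ie[OF that]
        by (simp add: M_def mult_mat_vec_def scalar_prod_def atLeast0LessThan)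
      moreover have "(\<Sum>y\<in>L. A x y * f y) = (\<Sum>j<d. A x (e j) * v $ j)"
        by (simp add: reidx f_def ie_e)
      ultimately show ?thesis by simp
    qed
    then have "f y = 0" if "y \<in> L" for y using inj that by blast
    then have "v $ j = 0" if "j < d" for j
      using that f_def ie_e eL by metis
    then have "v = 0\<^sub>v d" using v(1) by (intro eq_vecI) auto
    with v(2) show False by simp
  qed
  from det_non_zero_imp_unit[OF M this, of "()"]
  obtain B where B: "B \<in> carrier_mat d d" "M * B = 1\<^sub>m d" "B * M = 1\<^sub>m d"
    unfolding Units_def ring_mat_def by auto
  define G where "G x z = B $$ (ie x, ie z)" for x z
  show ?thesis
  proof (intro exI[of _ G] conjI ballI)
    fix x z assume xz: "x \<in> L" "z \<in> L"
    have "(M * B) $$ (ie x, ie z) = (\<Sum>j<d. A x (e j) * B $$ (j, ie z))"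
      using ieL[OF xz(1)] ieL[OF xz(2)] B(1) e_ie[OF xz(1)]
      by (simp add: M_def times_mat_def scalar_prod_def atLeast0LessThan)
    moreover have "mm L A G x z = (\<Sum>j<d. A x (e j) * B $$ (j, ie z))"
      by (simp add: mm_def reidx G_def ie_e)
    moreover have "(M * B) $$ (ie x, ie z) = dl x z"
      using B(2) ieL[OF xz(1)] ieL[OF xz(2)] xz e_ie by (auto simp: dl_def) (metis)
    ultimately show "mm L A G x z = dl x z" by simp
  next
    fix x z assume xz: "x \<in> L" "z \<in> L"
    have "(B * M) $$ (ie x, ie z) = (\<Sum>j<d. B $$ (ie x, j) * A (e j) z)"
      using ieL[OF xz(1)] ieL[OF xz(2)] B(1) e_ie[OF xz(2)]
      by (simp add: M_def times_mat_def scalar_prod_def atLeast0LessThan)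
    moreover have "mm L G A x z = (\<Sum>j<d. B $$ (ie x, j) * A (e j) z)"
      by (simp add: mm_def reidx G_def ie_e)
    moreover have "(B * M) $$ (ie x, ie z) = dl x z"
      using B(3) ieL[OF xz(1)] ieL[OF xz(2)] xz e_ie by (auto simp: dl_def) (metis)
    ultimately show "mm L G A x z = dl x z" by simp
  qed
qed


definition L :: "nat \<Rightarrow> nat \<Rightarrow> nat set set" where
  "L n t = {x. x \<subseteq> {1..n} \<and> card x = t}"

definition inc :: "nat set \<Rightarrow> nat set \<Rightarrow> real" where
  "inc x y = (if y \<subseteq> x then 1 else 0)"

lemma finite_L[simp]: "finite (L n t)"
  by (rule finite_subset[of _ "Pow {1..n}"]) (auto simp: L_def)

lemma card_L: "card (L n t) = n choose t"
  using n_subsets[of "{1..n}" t] by (simp add: L_def)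

lemma L_finite_elem: "x \<in> L n t \<Longrightarrow> finite x"
  by (auto simp: L_def intro: finite_subset)

lemma card_supersets:
  fixes w :: "nat set"
  assumes "w \<subseteq> {1..n}" "card w \<le> m"
  shows "card {x. x \<subseteq> {1..n} \<and> card x = m \<and> w \<subseteq> x} = (n - card w) choose (m - card w)"
proof -
  have fw: "finite w" using assms(1) finite_subset by blast
  have "bij_betw (\<lambda>x. x - w) {x. x \<subseteq> {1..n} \<and> card x = m \<and> w \<subseteq> x}
          {u. u \<subseteq> {1..n} - w \<and> card u = m - card w}"
  proof (rule bij_betw_byWitness[where f' = "\<lambda>u. u \<union> w"])
    show "\<forall>a\<in>{x. x \<subseteq> {1..n} \<and> card x = m \<and> w \<subseteq> x}. a - w \<union> w = a" by auto
    show "\<forall>a'\<in>{u. u \<subseteq> {1..n} - w \<and> card u = m - card w}. a' \<union> w - w = a'" by auto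
    show "(\<lambda>x. x - w) ` {x. x \<subseteq> {1..n} \<and> card x = m \<and> w \<subseteq> x}
          \<subseteq> {u. u \<subseteq> {1..n} - w \<and> card u = m - card w}"
    proof safe
      fix x assume "x \<subseteq> {1..n}" "w \<subseteq> x" "m = card x"
      then show "card (x - w) = card x - card w"
        using fw by (simp add: card_Diff_subset)
    qed auto
    show "(\<lambda>u. u \<union> w) ` {u. u \<subseteq> {1..n} - w \<and> card u = m - card w}
          \<subseteq> {x. x \<subseteq> {1..n} \<and> card x = m \<and> w \<subseteq> x}"
    proof safe
      fix u assume u: "u \<subseteq> {1..n} - w"
      have fu: "finite u" using u finite_subset by (metis finite_Diff finite_atLeastAtMost)
      have "card (u \<union> w) = card u + card w"
        using u fu fw by (intro card_Un_disjoint) auto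
      then show "card (u \<union> w) = m" if "card u = m - card w" using that assms(2) by simp
    qed (use assms(1) in auto)
  qed
  then have "card {x. x \<subseteq> {1..n} \<and> card x = m \<and> w \<subseteq> x} = card {u. u \<subseteq> {1..n} - w \<and> card u = m - card w}"
    by (rule bij_betw_same_card)
  also have "\<dots> = card ({1..n} - w) choose (m - card w)"
    by (rule n_subsets) simp
  also have "card ({1..n} - w) = n - card w"
    using assms(1) fw by (simp add: card_Diff_subset)
  finally show ?thesis .
qed


lemma supersets_empty:
  fixes w :: "nat set"
  assumes "card w > m"
  shows "{x. x \<subseteq> {1..n} \<and> card x = m \<and> w \<subseteq> x} = {}"
proof -
  { fix x assume "x \<subseteq> {1..n}" "card x = m" "w \<subseteq> x"
    then have "finite x" by (meson finite_atLeastAtMost rev_finite_subset)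
    then have "card w \<le> card x" using card_mono \<open>w \<subseteq> x\<close> by blast
    with assms \<open>card x = m\<close> have False by simp }
  then show ?thesis by blast
qed

lemma sum_inc_inc:
  "finite X \<Longrightarrow> (\<Sum>x\<in>X. inc x y * inc x y') = real (card {x\<in>X. y \<union> y' \<subseteq> x})"
proof -
  assume X: "finite X"
  have "(\<Sum>x\<in>X. inc x y * inc x y') = (\<Sum>x\<in>X. if y \<union> y' \<subseteq> x then 1 else 0)"
    by (rule sum.cong) (auto simp: inc_def)
  also have "\<dots> = real (card (X \<inter> {x. y \<union> y' \<subseteq> x}))"
    using X by (simp only: sum.If_cases) simp
  also have "X \<inter> {x. y \<union> y' \<subseteq> x} = {x\<in>X. y \<union> y' \<subseteq> x}" by blast
  finally show ?thesis .
qed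


lemma sq_expand:
  fixes a :: "'a \<Rightarrow> 'b \<Rightarrow> real"
  assumes "finite X" "finite Y"
  shows "(\<Sum>x\<in>X. (\<Sum>y\<in>Y. a x y * f y)^2) = (\<Sum>y\<in>Y. \<Sum>y'\<in>Y. f y * f y' * (\<Sum>x\<in>X. a x y * a x y'))"
proof -
  have "(\<Sum>x\<in>X. (\<Sum>y\<in>Y. a x y * f y)^2) = (\<Sum>x\<in>X. \<Sum>y\<in>Y. \<Sum>y'\<in>Y. f y * f y' * (a x y * a x y'))"
    by (simp add: power2_eq_square sum_product mult_ac)
  also have "\<dots> = (\<Sum>y\<in>Y. \<Sum>x\<in>X. \<Sum>y'\<in>Y. f y * f y' * (a x y * a x y'))"
    by (rule sum.swap)
  also have "\<dots> = (\<Sum>y\<in>Y. \<Sum>y'\<in>Y. \<Sum>x\<in>X. f y * f y' * (a x y * a x y'))"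
    by (rule sum.cong[OF refl], rule sum.swap)
  also have "\<dots> = (\<Sum>y\<in>Y. \<Sum>y'\<in>Y. f y * f y' * (\<Sum>x\<in>X. a x y * a x y'))"
    by (simp add: sum_distrib_left)
  finally show ?thesis .
qed


lemma sum_inc_inc2:
  "finite X \<Longrightarrow> (\<Sum>z\<in>X. inc y z * inc y' z) = real (card {z\<in>X. z \<subseteq> y \<inter> y'})"
proof -
  assume X: "finite X"
  have "(\<Sum>z\<in>X. inc y z * inc y' z) = (\<Sum>z\<in>X. if z \<subseteq> y \<inter> y' then 1 else 0)"
    by (rule sum.cong) (auto simp: inc_def)
  also have "\<dots> = real (card (X \<inter> {z. z \<subseteq> y \<inter> y'}))"
    using X by (simp only: sum.If_cases) simp
  also have "X \<inter> {z. z \<subseteq> y \<inter> y'} = {z\<in>X. z \<subseteq> y \<inter> y'}" by blast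
  finally show ?thesis .
qed

lemma card_Un_gt:
  fixes y y' :: "nat set"
  assumes "finite y" "finite y'" "card y = s" "card y' = s" "y \<noteq> y'"
  shows "card (y \<union> y') \<ge> Suc s"
proof -
  have "y \<subset> y \<union> y'"
  proof
    show "y \<subseteq> y \<union> y'" by blast
    show "y \<noteq> y \<union> y'"
    proof
      assume "y = y \<union> y'"
      then have "y' \<subseteq> y" by blast
      then have "y' = y" using assms by (metis card_subset_eq)
      with assms show False by simp
    qed
  qed
  then have "card y < card (y \<union> y')" using assms by (intro psubset_card_mono) auto
  with assms show ?thesis by simp
qed

lemma count_c1:
  assumes "y \<in> L n s" "y' \<in> L n s"
  shows "card {x \<in> L n (Suc s). y \<union> y' \<subseteq> x} =
    (if y = y' then n - s else if card (y \<union> y') = Suc s then 1 else 0)"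
proof -
  have eq: "{x \<in> L n (Suc s). y \<union> y' \<subseteq> x} = {x. x \<subseteq> {1..n} \<and> card x = Suc s \<and> y \<union> y' \<subseteq> x}"
    by (auto simp: L_def)
  have w: "y \<union> y' \<subseteq> {1..n}" using assms by (auto simp: L_def)
  have fy: "finite y" "finite y'" using assms L_finite_elem by auto
  have cy: "card y = s" "card y' = s" using assms by (auto simp: L_def)
  show ?thesis
  proof (cases "y = y'")
    case True
    then show ?thesis using card_supersets[of "y \<union> y'" n "Suc s"] w cy unfolding eq
      by (simp add: Suc_diff_le)
  next
    case False
    then have ge: "card (y \<union> y') \<ge> Suc s" using card_Un_gt fy cy by blast
    show ?thesis
    proof (cases "card (y \<union> y') = Suc s")
      case True
      then show ?thesis using False card_supersets[of "y \<union> y'" n "Suc s"] w unfolding eq by simp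
    next
      case F2: False
      then have "card (y \<union> y') > Suc s" using ge by simp
      then show ?thesis using False F2 supersets_empty[of "Suc s" "y \<union> y'" n] unfolding eq by simp
    qed
  qed
qed

lemma count_c2:
  assumes "y \<in> L n s" "y' \<in> L n s" "s \<ge> 1"
  shows "card {z \<in> L n (s - 1). z \<subseteq> y \<inter> y'} =
    (if y = y' then s else if card (y \<union> y') = Suc s then 1 else 0)"
proof -
  have eq: "{z \<in> L n (s - 1). z \<subseteq> y \<inter> y'} = {z. z \<subseteq> y \<inter> y' \<and> card z = s - 1}"
    using assms by (auto simp: L_def)
  have fy: "finite y" "finite y'" using assms L_finite_elem by auto
  have cy: "card y = s" "card y' = s" using assms by (auto simp: L_def)
  have c: "card {z \<in> L n (s - 1). z \<subseteq> y \<inter> y'} = card (y \<inter> y') choose (s - 1)"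
    unfolding eq by (rule n_subsets) (use fy in auto)
  have ui: "card (y \<union> y') + card (y \<inter> y') = s + s"
    using card_Un_Int[OF fy] cy by simp
  show ?thesis
  proof (cases "y = y'")
    case True
    have "s choose (s - 1) = s choose (s - (s - 1))" by (rule binomial_symmetric) simp
    also have "s - (s - 1) = 1" using assms(3) by simp
    finally have "s choose (s - 1) = s" by simp
    then show ?thesis using c cy True by simp
  next
    case False
    then have ge: "card (y \<union> y') \<ge> Suc s" using card_Un_gt fy cy by blast
    show ?thesis
    proof (cases "card (y \<union> y') = Suc s")
      case True
      then have "card (y \<inter> y') = s - 1" using ui by simp
      then show ?thesis using c False True by simp
    next
      case F2: False
      then have "card (y \<inter> y') < s - 1" using ui ge by simp
      then show ?thesis using c False F2 by simp
    qed
  qed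
qed

lemma U_inj:
  assumes "2 * s < n"
    and h: "\<And>x. x \<in> L n (Suc s) \<Longrightarrow> (\<Sum>y\<in>L n s. inc x y * f y) = 0"
    and y: "y \<in> L n s"
  shows "f y = 0"
proof (cases "s = 0")
  case True
  have L0: "L n 0 = {{}}"
  proof -
    have "x = {}" if "x \<subseteq> {1..n}" "card x = 0" for x :: "nat set"
      using that by (metis card_0_eq finite_atLeastAtMost rev_finite_subset)
    then show ?thesis by (auto simp: L_def)
  qed
  have "{1} \<in> L n (Suc 0)" using assms(1) by (auto simp: L_def)
  from h[of "{1}"] True this have "f {} = 0" by (simp add: L0 inc_def)
  then show ?thesis using y True L0 by simp
next
  case False
  then have s1: "s \<ge> 1" by simp
  let ?Y = "L n s"
  let ?c2 = "\<lambda>y y'. real (card {z \<in> L n (s - 1). z \<subseteq> y \<inter> y'})"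
  have "0 = (\<Sum>x\<in>L n (Suc s). (\<Sum>y\<in>?Y. inc x y * f y)^2)" using h by simp
  also have "\<dots> = (\<Sum>y\<in>?Y. \<Sum>y'\<in>?Y. f y * f y' * (\<Sum>x\<in>L n (Suc s). inc x y * inc x y'))"
    by (rule sq_expand) auto
  also have "\<dots> = (\<Sum>y\<in>?Y. \<Sum>y'\<in>?Y. f y * f y' * (?c2 y y' + (real n - 2 * real s) * dl y y'))"
  proof (intro sum.cong refl)
    fix y y' assume yy: "y \<in> ?Y" "y' \<in> ?Y"
    have "s \<le> n" using yy assms(1) by simp
    then show "f y * f y' * (\<Sum>x\<in>L n (Suc s). inc x y * inc x y') =
          f y * f y' * (?c2 y y' + (real n - 2 * real s) * dl y y')"
      using count_c1[OF yy] count_c2[OF yy s1] by (simp add: sum_inc_inc dl_def of_nat_diff)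
  qed
  also have "\<dots> = (\<Sum>y\<in>?Y. \<Sum>y'\<in>?Y. f y * f y' * ?c2 y y') + (real n - 2 * real s) * (\<Sum>y\<in>?Y. f y ^ 2)"
  proof -
    have "(\<Sum>y'\<in>?Y. f y * f y' * (?c2 y y' + (real n - 2 * real s) * dl y y')) =
        (\<Sum>y'\<in>?Y. f y * f y' * ?c2 y y') + (real n - 2 * real s) * f y ^ 2" if "y \<in> ?Y" for y
    proof -
      have "(\<Sum>y'\<in>?Y. f y * f y' * (?c2 y y' + (real n - 2 * real s) * dl y y')) =
        (\<Sum>y'\<in>?Y. f y * f y' * ?c2 y y') + (real n - 2 * real s) * f y * (\<Sum>y'\<in>?Y. dl y y' * f y')"
      proof -
        have "(\<Sum>y'\<in>?Y. f y * f y' * (?c2 y y' + (real n - 2 * real s) * dl y y')) =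
          (\<Sum>y'\<in>?Y. f y * f y' * ?c2 y y' + ((real n - 2 * real s) * f y) * (dl y y' * f y'))"
          by (rule sum.cong) (auto simp: algebra_simps)
        then show ?thesis by (simp add: sum.distrib sum_distrib_left[symmetric])
      qed
      also have "(\<Sum>y'\<in>?Y. dl y y' * f y') = f y" using that by (simp add: dl_sum)
      finally show ?thesis by (simp add: power2_eq_square)
    qed
    then show ?thesis by (simp add: sum.distrib sum_distrib_left)
  qed
  also have "(\<Sum>y\<in>?Y. \<Sum>y'\<in>?Y. f y * f y' * ?c2 y y') = (\<Sum>z\<in>L n (s - 1). (\<Sum>y\<in>?Y. inc y z * f y)^2)"
    by (subst sq_expand) (auto simp: sum_inc_inc2)
  finally have eq0: "0 = (\<Sum>z\<in>L n (s - 1). (\<Sum>y\<in>?Y. inc y z * f y)^2) + (real n - 2 * real s) * (\<Sum>y\<in>?Y. f y ^ 2)" .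
  have "(\<Sum>z\<in>L n (s - 1). (\<Sum>y\<in>?Y. inc y z * f y)^2) \<ge> 0" by (intro sum_nonneg) auto
  moreover have "(\<Sum>y\<in>?Y. f y ^ 2) \<ge> 0" by (intro sum_nonneg) auto
  moreover have "real n - 2 * real s > 0" using assms(1) by linarith
  ultimately have "(\<Sum>y\<in>?Y. f y ^ 2) = 0" using eq0
    by (smt (verit) mult_pos_pos zero_less_mult_iff)
  then have "f y ^ 2 = 0" using y by (subst (asm) sum_nonneg_eq_0_iff) auto
  then show ?thesis by simp
qed


lemma trc_cong: "(\<And>x. x \<in> S \<Longrightarrow> A x x = B x x) \<Longrightarrow> trc S A = trc S B"
  unfolding trc_def by (rule sum.cong) auto

lemma quad_form:
  fixes U :: "'a \<Rightarrow> 'a \<Rightarrow> real"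
  assumes "finite X" "finite Y"
  shows "(\<Sum>x\<in>X. (\<Sum>y\<in>Y. U x y * f y)^2) = (\<Sum>y\<in>Y. f y * (\<Sum>y'\<in>Y. mm X (\<lambda>y x. U x y) U y y' * f y'))"
proof -
  have "(\<Sum>x\<in>X. (\<Sum>y\<in>Y. U x y * f y)^2) = (\<Sum>y\<in>Y. \<Sum>y'\<in>Y. f y * f y' * (\<Sum>x\<in>X. U x y * U x y'))"
    by (rule sq_expand[OF assms])
  also have "\<dots> = (\<Sum>y\<in>Y. f y * (\<Sum>y'\<in>Y. mm X (\<lambda>y x. U x y) U y y' * f y'))"
    unfolding mm_def by (simp add: sum_distrib_left sum_distrib_right mult_ac)
  finally show ?thesis .
qed

lemma trace_recursion:
  fixes U K :: "'a \<Rightarrow> 'a \<Rightarrow> real"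
  assumes fin: "finite X" "finite Y"
    and H1: "\<And>f. (\<And>x. x \<in> X \<Longrightarrow> (\<Sum>y\<in>Y. U x y * f y) = 0) \<Longrightarrow> (\<And>y. y \<in> Y \<Longrightarrow> f y = 0)"
    and H2: "\<And>x y. x \<in> X \<Longrightarrow> y \<in> Y \<Longrightarrow> mm X K U x y = mm Y U K x y"
    and H3: "\<And>f. (\<And>y. y \<in> Y \<Longrightarrow> (\<Sum>x\<in>X. U x y * f x) = 0) \<Longrightarrow>
               (\<And>x. x \<in> X \<Longrightarrow> (\<Sum>x'\<in>X. K x x' * f x') = \<mu> * f x)"
  shows "trc X (mpow X K m) = trc Y (mpow Y K m) + \<mu> ^ m * (real (card X) - real (card Y))"
proof -
  define D where "D = (\<lambda>y x. U x y)"
  define DU where "DU = mm X D U"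
  have DUinj: "f y = 0" if h: "\<And>y. y \<in> Y \<Longrightarrow> (\<Sum>y'\<in>Y. DU y y' * f y') = 0" and y: "y \<in> Y" for f y
  proof -
    have "(\<Sum>x\<in>X. (\<Sum>y\<in>Y. U x y * f y)^2) = (\<Sum>y\<in>Y. f y * (\<Sum>y'\<in>Y. DU y y' * f y'))"
      unfolding DU_def D_def by (rule quad_form[OF fin])
    also have "\<dots> = 0" using h by simp
    finally have "(\<Sum>x\<in>X. (\<Sum>y\<in>Y. U x y * f y)^2) = 0" .
    then have "(\<Sum>y\<in>Y. U x y * f y)^2 = 0" if "x \<in> X" for x
      using fin that by (subst (asm) sum_nonneg_eq_0_iff) auto
    then have "(\<Sum>y\<in>Y. U x y * f y) = 0" if "x \<in> X" for x using that by simp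
    then show ?thesis using H1 y by blast
  qed
  obtain G where G1: "\<And>x z. x \<in> Y \<Longrightarrow> z \<in> Y \<Longrightarrow> mm Y DU G x z = dl x z"
    and G2: "\<And>x z. x \<in> Y \<Longrightarrow> z \<in> Y \<Longrightarrow> mm Y G DU x z = dl x z"
  proof -
    have "\<exists>G. (\<forall>x\<in>Y. \<forall>z\<in>Y. mm Y DU G x z = dl x z) \<and> (\<forall>x\<in>Y. \<forall>z\<in>Y. mm Y G DU x z = dl x z)"
      by (rule kernel_inverse[OF fin(2)]) (rule DUinj)
    then show ?thesis using that by blast
  qed
  define P where "P = mm Y (mm Y U G) D"
  define E where "E = (\<lambda>x x'. dl x x' - P x x')"
  have DP: "mm X D P y x' = D y x'" if "y \<in> Y" for y x'
  proof -
    have "mm X D P y x' = mm Y (mm Y DU G) D y x'"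
      unfolding P_def DU_def using fin by (simp add: mm_assoc)
    also have "\<dots> = mm Y dl D y x'"
      by (rule mm_cong) (use that G1 in auto)
    also have "\<dots> = D y x'" using that fin by (simp add: mm_dl_left)
    finally show ?thesis .
  qed
  have Ecol: "(\<Sum>x\<in>X. U x y * E x x') = 0" if "y \<in> Y" "x' \<in> X" for y x'
  proof -
    have "(\<Sum>x\<in>X. U x y * E x x') = (\<Sum>x\<in>X. D y x * dl x x') - mm X D P y x'"
      by (simp add: E_def D_def mm_def algebra_simps sum_subtractf)
    also have "(\<Sum>x\<in>X. D y x * dl x x') = D y x'" using that fin by (simp add: dl_sum')
    finally show ?thesis using DP[OF that(1)] by simp
  qed
  have Eeig: "(\<Sum>x''\<in>X. mpow X K m x x'' * E x'' x') = \<mu> ^ m * E x x'" if "x \<in> X" "x' \<in> X" for x x'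
  proof -
    have "\<And>x. x \<in> X \<Longrightarrow> (\<Sum>x''\<in>X. K x x'' * E x'' x') = \<mu> * E x x'"
      using H3[of "\<lambda>x. E x x'"] Ecol[OF _ that(2)] by blast
    from mpow_eigen[OF fin(1) this that(1)] show ?thesis .
  qed
  have trP: "trc X P = real (card Y)"
  proof -
    have "trc X P = trc Y (mm X D (mm Y U G))" unfolding P_def using fin by (rule trc_mm_comm)
    also have "\<dots> = trc Y (mm Y DU G)" unfolding DU_def using fin by (simp add: mm_assoc)
    also have "\<dots> = trc Y dl" by (rule trc_cong) (use G1 in auto)
    also have "\<dots> = real (card Y)" by (simp add: trc_def dl_def)
    finally show ?thesis .
  qed
  have trKP: "trc X (mm X (mpow X K m) P) = trc Y (mpow Y K m)"
  proof -
    have "trc X (mm X (mpow X K m) P) = trc X (mm Y (mm Y (mm X (mpow X K m) U) G) D)"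
      unfolding P_def using fin by (simp add: mm_assoc)
    also have "\<dots> = trc Y (mm X D (mm Y (mm X (mpow X K m) U) G))" using fin by (rule trc_mm_comm)
    also have "\<dots> = trc Y (mm X D (mm Y (mm Y U (mpow Y K m)) G))"
    proof (rule trc_cong)
      fix y assume "y \<in> Y"
      show "mm X D (mm Y (mm X (mpow X K m) U) G) y y = mm X D (mm Y (mm Y U (mpow Y K m)) G) y y"
      proof (rule mm_cong)
        fix x assume "x \<in> X"
        show "mm Y (mm X (mpow X K m) U) G x y = mm Y (mm Y U (mpow Y K m)) G x y"
          by (rule mm_cong) (use mpow_intertwine[OF fin(2) fin(1) H2] \<open>x \<in> X\<close> in auto)
      qed simp
    qed
    also have "\<dots> = trc Y (mm Y DU (mm Y (mpow Y K m) G))"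
      unfolding DU_def using fin by (simp add: mm_assoc)
    also have "\<dots> = trc Y (mm Y (mm Y (mpow Y K m) G) DU)"
      using trc_mm_comm[OF fin(2) fin(2)] by blast
    also have "\<dots> = trc Y (mm Y (mpow Y K m) (mm Y G DU))"
      using fin by (simp add: mm_assoc)
    also have "\<dots> = trc Y (mm Y (mpow Y K m) dl)"
    proof (rule trc_cong)
      fix y assume "y \<in> Y"
      show "mm Y (mpow Y K m) (mm Y G DU) y y = mm Y (mpow Y K m) dl y y"
        by (rule mm_cong) (use G2 \<open>y \<in> Y\<close> in auto)
    qed
    also have "\<dots> = trc Y (mpow Y K m)"
      by (rule trc_cong) (use fin in \<open>simp add: mm_dl_right\<close>)
    finally show ?thesis .
  qed
  have "trc X (mpow X K m) = (\<Sum>x\<in>X. \<Sum>x''\<in>X. mpow X K m x x'' * (P x'' x + E x'' x))"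
    unfolding trc_def
  proof (rule sum.cong[OF refl])
    fix x assume "x \<in> X"
    have "(\<Sum>x''\<in>X. mpow X K m x x'' * (P x'' x + E x'' x)) = (\<Sum>x''\<in>X. mpow X K m x x'' * dl x'' x)"
      by (simp add: E_def)
    also have "\<dots> = mpow X K m x x" using fin \<open>x \<in> X\<close> by (simp add: dl_sum')
    finally show "mpow X K m x x = (\<Sum>x''\<in>X. mpow X K m x x'' * (P x'' x + E x'' x))" by simp
  qed
  also have "\<dots> = trc X (mm X (mpow X K m) P) + (\<Sum>x\<in>X. \<mu> ^ m * E x x)"
  proof -
    have "(\<Sum>x\<in>X. \<Sum>x''\<in>X. mpow X K m x x'' * (P x'' x + E x'' x)) =
      (\<Sum>x\<in>X. (\<Sum>x''\<in>X. mpow X K m x x'' * P x'' x) + (\<Sum>x''\<in>X. mpow X K m x x'' * E x'' x))"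
      by (simp only: distrib_left sum.distrib)
    also have "\<dots> = (\<Sum>x\<in>X. (\<Sum>x''\<in>X. mpow X K m x x'' * P x'' x) + \<mu> ^ m * E x x)"
      by (rule sum.cong[OF refl]) (simp add: Eeig)
    also have "\<dots> = trc X (mm X (mpow X K m) P) + (\<Sum>x\<in>X. \<mu> ^ m * E x x)"
      by (simp only: sum.distrib trc_def mm_def)
    finally show ?thesis .
  qed
  also have "(\<Sum>x\<in>X. \<mu> ^ m * E x x) = \<mu> ^ m * (real (card X) - trc X P)"
  proof -
    have "(\<Sum>x\<in>X. E x x) = (\<Sum>x\<in>X. 1) - trc X P"
      by (simp add: E_def sum_subtractf trc_def dl_def)
    then show ?thesis by (simp add: sum_distrib_left[symmetric])
  qed
  finally show ?thesis using trKP trP by simp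
qed




definition Kker :: "nat \<Rightarrow> ((nat \<Rightarrow> nat) \<Rightarrow> real) \<Rightarrow> nat set \<Rightarrow> nat set \<Rightarrow> real" where
  "Kker n P x y = (\<Sum>g\<in>Sym n. P g * dl (g ` x) y)"

lemma finite_Sym[simp]: "finite (Sym n)"
  unfolding Sym_def by (rule finite_permutations) simp

lemma Sym_permutes: "g \<in> Sym n \<Longrightarrow> g permutes {1..n}"
  by (simp add: Sym_def)

lemma id_Sym[simp]: "id \<in> Sym n"
  by (simp add: Sym_def permutes_id)

lemma inv_Sym: "g \<in> Sym n \<Longrightarrow> inv g \<in> Sym n"
  unfolding Sym_def by (simp add: permutes_inv)

lemma comp_Sym: "g \<in> Sym n \<Longrightarrow> h \<in> Sym n \<Longrightarrow> g \<circ> h \<in> Sym n"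
  unfolding Sym_def by (simp add: permutes_compose)

lemma Sym_inj: "g \<in> Sym n \<Longrightarrow> inj g"
  using Sym_permutes permutes_inj by blast

lemma Sym_inv_o: "g \<in> Sym n \<Longrightarrow> g \<circ> inv g = id \<and> inv g \<circ> g = id"
  using Sym_permutes permutes_inv_o by blast

lemma Sym_inv_pt: "g \<in> Sym n \<Longrightarrow> inv g (g z) = z \<and> g (inv g z) = z"
  using Sym_permutes permutes_inverses by metis

lemma dl_sum1: "finite S \<Longrightarrow> x \<in> S \<Longrightarrow> (\<Sum>y\<in>S. dl x y) = 1"
  using dl_sum[of S x "\<lambda>_. 1"] by simp

lemma Sym_inv_img1: "g \<in> Sym n \<Longrightarrow> inv g ` (g ` A) = A"
  using Sym_inv_o[of g n] by (simp add: image_comp)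

lemma Sym_inv_img2: "g \<in> Sym n \<Longrightarrow> g ` (inv g ` A) = A"
  using Sym_inv_o[of g n] by (simp add: image_comp)

lemma image_L: assumes "g \<in> Sym n" "x \<in> L n t" shows "g ` x \<in> L n t"
proof -
  have "g ` x \<subseteq> g ` {1..n}" using assms(2) by (auto simp: L_def)
  also have "g ` {1..n} = {1..n}" using Sym_permutes[OF assms(1)] by (rule permutes_image)
  finally have "g ` x \<subseteq> {1..n}" .
  moreover have "card (g ` x) = card x"
    using Sym_inj[OF assms(1)] by (simp add: card_image inj_on_subset)
  ultimately show ?thesis using assms(2) by (simp add: L_def)
qed

lemma img_eq_iff: "g \<in> Sym n \<Longrightarrow> (g ` y' = y) \<longleftrightarrow> (y' = inv g ` y)"
  using Sym_inv_img1[of g n y'] Sym_inv_img2[of g n y] by auto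

lemma img_subset_iff: "g \<in> Sym n \<Longrightarrow> (inv g ` y \<subseteq> x) \<longleftrightarrow> (y \<subseteq> g ` x)"
proof
  assume g: "g \<in> Sym n"
  { assume "inv g ` y \<subseteq> x"
    then have "g ` (inv g ` y) \<subseteq> g ` x" by (rule image_mono)
    then show "y \<subseteq> g ` x" using Sym_inv_img2[OF g] by simp }
  { assume "y \<subseteq> g ` x"
    then have "inv g ` y \<subseteq> inv g ` (g ` x)" by (rule image_mono)
    then show "inv g ` y \<subseteq> x" using Sym_inv_img1[OF g] by simp }
qed

lemma Kker_rowsum:
  assumes "x \<in> L n t" "(\<Sum>g\<in>Sym n. P g) = 1"
  shows "(\<Sum>y\<in>L n t. Kker n P x y) = 1"
proof -
  have "(\<Sum>y\<in>L n t. Kker n P x y) = (\<Sum>g\<in>Sym n. P g * (\<Sum>y\<in>L n t. dl (g ` x) y * 1))"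
    unfolding Kker_def by (subst sum.swap) (simp add: sum_distrib_left)
  also have "\<dots> = (\<Sum>g\<in>Sym n. P g)"
    by (rule sum.cong[OF refl]) (simp add: dl_sum1 image_L assms(1))
  finally show ?thesis using assms(2) by simp
qed

lemma Kker_intertwine:
  assumes x: "x \<in> L n (Suc s)" and y: "y \<in> L n s"
  shows "mm (L n (Suc s)) (Kker n P) inc x y = mm (L n s) inc (Kker n P) x y"
proof -
  have "mm (L n (Suc s)) (Kker n P) inc x y = (\<Sum>g\<in>Sym n. P g * (\<Sum>x'\<in>L n (Suc s). dl (g ` x) x' * inc x' y))"
    unfolding mm_def Kker_def by (simp add: sum_distrib_right sum_distrib_left mult.assoc) (rule sum.swap)
  also have "\<dots> = (\<Sum>g\<in>Sym n. P g * inc (g ` x) y)"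
    by (rule sum.cong[OF refl]) (simp add: dl_sum image_L x)
  also have "\<dots> = (\<Sum>g\<in>Sym n. P g * (\<Sum>y'\<in>L n s. inc x y' * dl (g ` y') y))"
  proof (rule sum.cong[OF refl])
    fix g assume g: "g \<in> Sym n"
    have "(\<Sum>y'\<in>L n s. inc x y' * dl (g ` y') y) = (\<Sum>y'\<in>L n s. inc x y' * dl y' (inv g ` y))"
      by (rule sum.cong[OF refl]) (simp add: dl_def img_eq_iff[OF g])
    also have "\<dots> = inc x (inv g ` y)"
      by (rule dl_sum') (auto intro: image_L inv_Sym g y)
    also have "\<dots> = inc (g ` x) y" by (simp add: inc_def img_subset_iff[OF g])
    finally show "P g * inc (g ` x) y = P g * (\<Sum>y'\<in>L n s. inc x y' * dl (g ` y') y)" by simp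
  qed
  also have "\<dots> = mm (L n s) inc (Kker n P) x y"
    unfolding mm_def Kker_def by (simp add: sum_distrib_right sum_distrib_left mult_ac) (rule sum.swap)
  finally show ?thesis .
qed

lemma conj_bij: "\<sigma> \<in> Sym n \<Longrightarrow> bij_betw (\<lambda>h. \<sigma> \<circ> h \<circ> inv \<sigma>) (Sym n) (Sym n)"
proof (rule bij_betw_byWitness[where f' = "\<lambda>g. inv \<sigma> \<circ> g \<circ> \<sigma>"])
  assume s: "\<sigma> \<in> Sym n"
  have o: "\<sigma> \<circ> inv \<sigma> = id" "inv \<sigma> \<circ> \<sigma> = id" using Sym_inv_o[OF s] by auto
  show "\<forall>a\<in>Sym n. inv \<sigma> \<circ> (\<sigma> \<circ> a \<circ> inv \<sigma>) \<circ> \<sigma> = a"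
    using Sym_inv_pt[OF s] by (simp add: fun_eq_iff)
  show "\<forall>a\<in>Sym n. \<sigma> \<circ> (inv \<sigma> \<circ> a \<circ> \<sigma>) \<circ> inv \<sigma> = a"
    using Sym_inv_pt[OF s] by (simp add: fun_eq_iff)
  show "(\<lambda>h. \<sigma> \<circ> h \<circ> inv \<sigma>) ` Sym n \<subseteq> Sym n"
    using s by (auto intro!: comp_Sym inv_Sym)
  show "(\<lambda>g. inv \<sigma> \<circ> g \<circ> \<sigma>) ` Sym n \<subseteq> Sym n"
    using s by (auto intro!: comp_Sym inv_Sym)
qed

lemma Kker_invariant:
  assumes s: "\<sigma> \<in> Sym n" and P: "\<And>g. g \<in> Sym n \<Longrightarrow> P (\<sigma> \<circ> g \<circ> inv \<sigma>) = P g"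
  shows "Kker n P (\<sigma> ` x) (\<sigma> ` y) = Kker n P x y"
proof -
  have o: "inv \<sigma> \<circ> \<sigma> = id" using Sym_inv_o[OF s] by auto
  have "Kker n P (\<sigma> ` x) (\<sigma> ` y) = (\<Sum>h\<in>Sym n. P (\<sigma> \<circ> h \<circ> inv \<sigma>) * dl ((\<sigma> \<circ> h \<circ> inv \<sigma>) ` \<sigma> ` x) (\<sigma> ` y))"
    unfolding Kker_def by (rule sum.reindex_bij_betw[OF conj_bij[OF s], symmetric])
  also have "\<dots> = (\<Sum>h\<in>Sym n. P h * dl (h ` x) y)"
  proof (rule sum.cong[OF refl])
    fix h assume h: "h \<in> Sym n"
    have "(\<sigma> \<circ> h \<circ> inv \<sigma>) ` \<sigma> ` x = \<sigma> ` (h ` x)"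
      using Sym_inv_pt[OF s] by (simp add: image_comp o_def)
    moreover have "(\<sigma> ` (h ` x) = \<sigma> ` y) \<longleftrightarrow> h ` x = y"
      using Sym_inj[OF s] by (simp add: inj_image_eq_iff)
    ultimately show "P (\<sigma> \<circ> h \<circ> inv \<sigma>) * dl ((\<sigma> \<circ> h \<circ> inv \<sigma>) ` \<sigma> ` x) (\<sigma> ` y) = P h * dl (h ` x) y"
      using P[OF h] by (simp add: dl_def)
  qed
  finally show ?thesis unfolding Kker_def .
qed



lemma transport:
  fixes x y x' y' :: "nat set"
  assumes sub: "x \<subseteq> {1..n}" "y \<subseteq> {1..n}" "x' \<subseteq> {1..n}" "y' \<subseteq> {1..n}"
    and cx: "card x = card x'" and cy: "card y = card y'" and ci: "card (x \<inter> y) = card (x' \<inter> y')"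
  shows "\<exists>\<sigma>\<in>Sym n. \<sigma> ` x = x' \<and> \<sigma> ` y = y'"
proof -
  have fin: "finite x" "finite y" "finite x'" "finite y'"
    using sub by (meson finite_atLeastAtMost rev_finite_subset)+
  define B1 where "B1 = x \<inter> y"
  define B2 where "B2 = x - y"
  define B3 where "B3 = y - x"
  define B4 where "B4 = {1..n} - (x \<union> y)"
  define C1 where "C1 = x' \<inter> y'"
  define C2 where "C2 = x' - y'"
  define C3 where "C3 = y' - x'"
  define C4 where "C4 = {1..n} - (x' \<union> y')"
  have cu: "card (x \<union> y) = card (x' \<union> y')"
    using card_Un_Int[OF fin(1,2)] card_Un_Int[OF fin(3,4)] cx cy ci by simp
  have "card B1 = card C1" using ci B1_def C1_def by simp
  moreover have "card B2 = card C2"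
    unfolding B2_def C2_def using fin cx ci by (simp add: card_Diff_subset_Int)
  moreover have "card B3 = card C3"
    unfolding B3_def C3_def using fin cy ci by (simp add: card_Diff_subset_Int Int_commute)
  moreover have "card B4 = card C4"
    unfolding B4_def C4_def using fin cu sub by (simp add: card_Diff_subset)
  ultimately obtain h1 h2 h3 h4 where h: "bij_betw h1 B1 C1" "bij_betw h2 B2 C2" "bij_betw h3 B3 C3" "bij_betw h4 B4 C4"
    using finite_same_card_bij fin unfolding B1_def B2_def B3_def B4_def C1_def C2_def C3_def C4_def
    by (metis finite_Diff finite_Int finite_atLeastAtMost)
  define \<sigma> where "\<sigma> z = (if z \<in> B1 then h1 z else if z \<in> B2 then h2 z else if z \<in> B3 then h3 z
     else if z \<in> B4 then h4 z else z)" for z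
  have d: "B1 \<inter> B2 = {}" "B1 \<inter> B3 = {}" "B1 \<inter> B4 = {}" "B2 \<inter> B3 = {}" "B2 \<inter> B4 = {}" "B3 \<inter> B4 = {}"
    by (auto simp: B1_def B2_def B3_def B4_def)
  have dC: "C1 \<inter> C2 = {}" "C1 \<inter> C3 = {}" "C1 \<inter> C4 = {}" "C2 \<inter> C3 = {}" "C2 \<inter> C4 = {}" "C3 \<inter> C4 = {}"
    by (auto simp: C1_def C2_def C3_def C4_def)
  have s1: "bij_betw \<sigma> B1 C1" using h(1) by (rule bij_betw_cong[THEN iffD1, rotated]) (simp add: \<sigma>_def)
  have s2: "bij_betw \<sigma> B2 C2" using h(2) d by (intro bij_betw_cong[THEN iffD1, rotated, OF h(2)]) (auto simp: \<sigma>_def)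
  have s3: "bij_betw \<sigma> B3 C3" using h(3) d by (intro bij_betw_cong[THEN iffD1, rotated, OF h(3)]) (auto simp: \<sigma>_def)
  have s4: "bij_betw \<sigma> B4 C4" using h(4) d by (intro bij_betw_cong[THEN iffD1, rotated, OF h(4)]) (auto simp: \<sigma>_def)
  have "bij_betw \<sigma> (B1 \<union> B2 \<union> B3 \<union> B4) (C1 \<union> C2 \<union> C3 \<union> C4)"
    using s1 s2 s3 s4 dC by (intro bij_betw_combine) auto
  moreover have "B1 \<union> B2 \<union> B3 \<union> B4 = {1..n}" "C1 \<union> C2 \<union> C3 \<union> C4 = {1..n}"
    using sub by (auto simp: B1_def B2_def B3_def B4_def C1_def C2_def C3_def C4_def)
  ultimately have bij: "bij_betw \<sigma> {1..n} {1..n}" by simp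
  have "\<sigma> z = z" if "z \<notin> {1..n}" for z
    using that sub by (auto simp: \<sigma>_def B1_def B2_def B3_def B4_def)
  then have "\<sigma> permutes {1..n}" using bij by (intro bij_imp_permutes) auto
  then have sS: "\<sigma> \<in> Sym n" by (simp add: Sym_def)
  have "\<sigma> ` x = \<sigma> ` B1 \<union> \<sigma> ` B2" by (auto simp: B1_def B2_def)
  also have "\<dots> = C1 \<union> C2" using s1 s2 by (simp add: bij_betw_imp_surj_on)
  also have "\<dots> = x'" by (auto simp: C1_def C2_def)
  finally have ix: "\<sigma> ` x = x'" .
  have "\<sigma> ` y = \<sigma> ` B1 \<union> \<sigma> ` B3" by (auto simp: B1_def B3_def)
  also have "\<dots> = C1 \<union> C3" using s1 s3 by (simp add: bij_betw_imp_surj_on)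
  also have "\<dots> = y'" by (auto simp: C1_def C3_def)
  finally have iy: "\<sigma> ` y = y'" .
  show ?thesis using sS ix iy by blast
qed

lemma kcycles_Sym: "kcycles n k \<subseteq> Sym n"
proof
  fix g assume "g \<in> kcycles n k"
  then obtain cs where cs: "set cs \<subseteq> {1..n}" "g = cycle_of_list cs" by (auto simp: kcycles_def)
  then show "g \<in> Sym n" using cycle_permutes[of cs] permutes_subset by (auto simp: Sym_def)
qed

lemma finite_kcycles[simp]: "finite (kcycles n k)"
  using kcycles_Sym finite_Sym finite_subset by blast

lemma kcycles_nonempty: "k \<le> n \<Longrightarrow> kcycles n k \<noteq> {}"
proof -
  assume "k \<le> n"
  then have "cycle_of_list [1..<Suc k] \<in> kcycles n k"
    unfolding kcycles_def by (intro CollectI exI[of _ "[1..<Suc k]"]) auto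
  then show ?thesis by blast
qed

lemma kcycles_conj:
  assumes s: "\<sigma> \<in> Sym n" and g: "g \<in> kcycles n k"
  shows "\<sigma> \<circ> g \<circ> inv \<sigma> \<in> kcycles n k"
proof -
  obtain cs where cs: "distinct cs" "length cs = k" "set cs \<subseteq> {1..n}" "g = cycle_of_list cs"
    using g by (auto simp: kcycles_def)
  have b: "bij \<sigma>" using Sym_permutes[OF s] permutes_bij by blast
  have "\<sigma> \<circ> g \<circ> inv \<sigma> = cycle_of_list (map \<sigma> cs)"
    using conjugation_of_cycle[OF cs(1) b] cs(4) by simp
  moreover have "distinct (map \<sigma> cs)" using cs(1) Sym_inj[OF s] by (simp add: distinct_map inj_on_def inj_def)
  moreover have "set (map \<sigma> cs) \<subseteq> {1..n}"
    using cs(3) permutes_image[OF Sym_permutes[OF s]] by auto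
  ultimately show ?thesis using cs(2) unfolding kcycles_def
    by (intro CollectI exI[of _ "map \<sigma> cs"]) auto
qed

lemma kcycles_conj_iff:
  assumes s: "\<sigma> \<in> Sym n"
  shows "\<sigma> \<circ> g \<circ> inv \<sigma> \<in> kcycles n k \<longleftrightarrow> g \<in> kcycles n k"
proof
  assume "\<sigma> \<circ> g \<circ> inv \<sigma> \<in> kcycles n k"
  from kcycles_conj[OF inv_Sym[OF s] this]
  have "inv \<sigma> \<circ> (\<sigma> \<circ> g \<circ> inv \<sigma>) \<circ> inv (inv \<sigma>) \<in> kcycles n k" .
  moreover have "inv \<sigma> \<circ> (\<sigma> \<circ> g \<circ> inv \<sigma>) \<circ> inv (inv \<sigma>) = g"
  proof -
    have b: "bij \<sigma>" using Sym_permutes[OF s] permutes_bij by blast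
    have "inv (inv \<sigma>) = \<sigma>" using b by (simp add: inv_inv_eq)
    then show ?thesis using Sym_inv_pt[OF s] by (simp add: fun_eq_iff)
  qed
  ultimately show "g \<in> kcycles n k" by simp
qed (rule kcycles_conj[OF s])

lemma Qcyc_conj: "\<sigma> \<in> Sym n \<Longrightarrow> Qcyc n k (\<sigma> \<circ> g \<circ> inv \<sigma>) = Qcyc n k g"
  by (simp add: Qcyc_def kcycles_conj_iff)

lemma Qcyc_sum: "k \<le> n \<Longrightarrow> (\<Sum>g\<in>Sym n. Qcyc n k g) = 1"
proof -
  assume kn: "k \<le> n"
  have "(\<Sum>g\<in>Sym n. Qcyc n k g) = (\<Sum>g\<in>kcycles n k. 1 / real (card (kcycles n k)))"
    unfolding Qcyc_def using kcycles_Sym by (simp add: sum.If_cases Int_absorb1)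
  also have "\<dots> = 1" using kcycles_nonempty[OF kn] by (simp add: card_eq_0_iff)
  finally show ?thesis .
qed

lemma Kq_invariant:
  assumes "\<sigma> \<in> Sym n"
  shows "Kker n (Qcyc n k) (\<sigma> ` x) (\<sigma> ` y) = Kker n (Qcyc n k) x y"
  by (rule Kker_invariant[OF assms]) (simp add: Qcyc_conj[OF assms])

lemma Kq_const:
  assumes "x \<in> L n t" "y \<in> L n t" "x' \<in> L n t" "y' \<in> L n t" "card (x \<inter> y) = card (x' \<inter> y')"
  shows "Kker n (Qcyc n k) x y = Kker n (Qcyc n k) x' y'"
proof -
  obtain \<sigma> where "\<sigma> \<in> Sym n" "\<sigma> ` x = x'" "\<sigma> ` y = y'"
    using transport[of x n y x' y'] assms by (auto simp: L_def)
  then show ?thesis using Kq_invariant by metis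
qed



lemma card_supersets_gen:
  fixes w :: "'a set"
  assumes "finite A" "w \<subseteq> A" "card w \<le> m"
  shows "card {x. x \<subseteq> A \<and> card x = m \<and> w \<subseteq> x} = (card A - card w) choose (m - card w)"
proof -
  have fw: "finite w" using assms(1,2) finite_subset by blast
  have "bij_betw (\<lambda>x. x - w) {x. x \<subseteq> A \<and> card x = m \<and> w \<subseteq> x}
          {u. u \<subseteq> A - w \<and> card u = m - card w}"
  proof (rule bij_betw_byWitness[where f' = "\<lambda>u. u \<union> w"])
    show "\<forall>a\<in>{x. x \<subseteq> A \<and> card x = m \<and> w \<subseteq> x}. a - w \<union> w = a" by auto
    show "\<forall>a'\<in>{u. u \<subseteq> A - w \<and> card u = m - card w}. a' \<union> w - w = a'" by auto
    show "(\<lambda>x. x - w) ` {x. x \<subseteq> A \<and> card x = m \<and> w \<subseteq> x}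
          \<subseteq> {u. u \<subseteq> A - w \<and> card u = m - card w}"
    proof safe
      fix x assume "x \<subseteq> A" "w \<subseteq> x" "m = card x"
      then show "card (x - w) = card x - card w"
        using fw by (simp add: card_Diff_subset)
    qed auto
    show "(\<lambda>u. u \<union> w) ` {u. u \<subseteq> A - w \<and> card u = m - card w}
          \<subseteq> {x. x \<subseteq> A \<and> card x = m \<and> w \<subseteq> x}"
    proof safe
      fix u assume u: "u \<subseteq> A - w"
      have fu: "finite u" using u assms(1) finite_subset by (metis finite_Diff)
      have "card (u \<union> w) = card u + card w"
        using u fu fw by (intro card_Un_disjoint) auto
      then show "card (u \<union> w) = m" if "card u = m - card w" using that assms(3) by simp
    qed (use assms(2) in auto)
  qed
  then have "card {x. x \<subseteq> A \<and> card x = m \<and> w \<subseteq> x} = card {u. u \<subseteq> A - w \<and> card u = m - card w}"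
    by (rule bij_betw_same_card)
  also have "\<dots> = card (A - w) choose (m - card w)"
    by (rule n_subsets) (use assms(1) in simp)
  also have "card (A - w) = card A - card w"
    using assms(2) fw by (simp add: card_Diff_subset)
  finally show ?thesis .
qed

lemma vanish:
  assumes hD: "\<And>w. w \<in> L n s \<Longrightarrow> (\<Sum>y\<in>L n (Suc s). inc y w * f y) = 0"
  shows "d \<le> s \<Longrightarrow> z \<in> L n (s - d) \<Longrightarrow> (\<Sum>y\<in>L n (Suc s). inc y z * f y) = 0"
proof (induction d arbitrary: z)
  case 0
  then show ?case using hD by simp
next
  case (Suc d)
  define i where "i = s - Suc d"
  have i1: "Suc i = s - d" using Suc.prems(1) unfolding i_def by simp
  have z: "z \<in> L n i" using Suc.prems(2) unfolding i_def .
  have "0 = (\<Sum>w\<in>L n (Suc i). inc w z * (\<Sum>y\<in>L n (Suc s). inc y w * f y))"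
  proof -
    have "(\<Sum>y\<in>L n (Suc s). inc y w * f y) = 0" if "w \<in> L n (Suc i)" for w
      using Suc.IH[of w] Suc.prems(1) i1 that by simp
    then show ?thesis by simp
  qed
  also have "\<dots> = (\<Sum>w\<in>L n (Suc i). \<Sum>y\<in>L n (Suc s). f y * (inc w z * inc y w))"
    by (simp add: sum_distrib_left mult_ac)
  also have "\<dots> = (\<Sum>y\<in>L n (Suc s). \<Sum>w\<in>L n (Suc i). f y * (inc w z * inc y w))"
    by (rule sum.swap)
  also have "\<dots> = (\<Sum>y\<in>L n (Suc s). f y * (\<Sum>w\<in>L n (Suc i). inc w z * inc y w))"
    by (simp add: sum_distrib_left)
  also have "\<dots> = (\<Sum>y\<in>L n (Suc s). f y * (real (Suc s - i) * inc y z))"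
  proof (rule sum.cong[OF refl])
    fix y assume y: "y \<in> L n (Suc s)"
    have fy: "finite y" using y L_finite_elem by blast
    have "(\<Sum>w\<in>L n (Suc i). inc w z * inc y w) = real (card {w \<in> L n (Suc i). z \<subseteq> w \<and> w \<subseteq> y})"
    proof -
      have "(\<Sum>w\<in>L n (Suc i). inc w z * inc y w) = (\<Sum>w\<in>L n (Suc i). if z \<subseteq> w \<and> w \<subseteq> y then 1 else 0)"
        by (rule sum.cong) (auto simp: inc_def)
      also have "\<dots> = real (card (L n (Suc i) \<inter> {w. z \<subseteq> w \<and> w \<subseteq> y}))"
        by (simp only: sum.If_cases finite_L) simp
      also have "L n (Suc i) \<inter> {w. z \<subseteq> w \<and> w \<subseteq> y} = {w \<in> L n (Suc i). z \<subseteq> w \<and> w \<subseteq> y}" by blast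
      finally show ?thesis .
    qed
    also have "\<dots> = real (Suc s - i) * inc y z"
    proof (cases "z \<subseteq> y")
      case True
      have "{w \<in> L n (Suc i). z \<subseteq> w \<and> w \<subseteq> y} = {w. w \<subseteq> y \<and> card w = Suc i \<and> z \<subseteq> w}"
        using y by (auto simp: L_def)
      moreover have "card {w. w \<subseteq> y \<and> card w = Suc i \<and> z \<subseteq> w} = (card y - card z) choose (Suc i - card z)"
        using z True fy by (intro card_supersets_gen) (auto simp: L_def)
      moreover have "card y = Suc s" "card z = i" using y z by (auto simp: L_def)
      ultimately have "card {w \<in> L n (Suc i). z \<subseteq> w \<and> w \<subseteq> y} = Suc s - i" by simp
      then show ?thesis using True by (simp add: inc_def)
    next
      case False
      then have "{w \<in> L n (Suc i). z \<subseteq> w \<and> w \<subseteq> y} = {}" by blast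
      then show ?thesis using False by (simp add: inc_def)
    qed
    finally show "f y * (\<Sum>w\<in>L n (Suc i). inc w z * inc y w) = f y * (real (Suc s - i) * inc y z)" by simp
  qed
  also have "\<dots> = real (Suc s - i) * (\<Sum>y\<in>L n (Suc s). inc y z * f y)"
    by (simp add: sum_distrib_left mult_ac)
  finally have "real (Suc s - i) * (\<Sum>y\<in>L n (Suc s). inc y z * f y) = 0" by simp
  moreover have "real (Suc s - i) \<noteq> 0" using Suc.prems(1) i_def by simp
  ultimately show ?case by simp
qed

lemma int_card_eq:
  assumes "x \<in> L n t" "y \<in> L n t"
  shows "card (x \<inter> y) = t \<longleftrightarrow> x = y"
proof
  assume c: "card (x \<inter> y) = t"
  have f: "finite x" "finite y" using assms L_finite_elem by auto
  have cx: "card x = t" "card y = t" using assms by (auto simp: L_def)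
  have "x \<inter> y = x" using f c cx by (metis card_subset_eq finite_Int inf_le1)
  moreover have "x \<inter> y = y" using f c cx by (metis card_subset_eq finite_Int inf_le2)
  ultimately show "x = y" by simp
qed (use assms in \<open>auto simp: L_def\<close>)

lemma int_card_le: "x \<in> L n t \<Longrightarrow> card (x \<inter> y) \<le> t"
proof -
  assume x: "x \<in> L n t"
  then have "finite x" by (rule L_finite_elem)
  then have "card (x \<inter> y) \<le> card x" by (intro card_mono) auto
  then show ?thesis using x by (simp add: L_def)
qed

lemma lemmaZ:
  assumes hD: "\<And>w. w \<in> L n s \<Longrightarrow> (\<Sum>y\<in>L n (Suc s). inc y w * f y) = 0"
    and x: "x \<in> L n (Suc s)" and i: "i \<le> Suc s"
  shows "(\<Sum>y\<in>L n (Suc s). real (card (x \<inter> y) choose i) * f y) = (if i = Suc s then f x else 0)"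
proof (cases "i = Suc s")
  case True
  have "(\<Sum>y\<in>L n (Suc s). real (card (x \<inter> y) choose i) * f y) = (\<Sum>y\<in>L n (Suc s). dl x y * f y)"
  proof (rule sum.cong[OF refl])
    fix y assume y: "y \<in> L n (Suc s)"
    have "card (x \<inter> y) \<le> Suc s" using int_card_le[OF x] .
    then have "(card (x \<inter> y) choose Suc s) = (if card (x \<inter> y) = Suc s then 1 else 0)"
      by (cases "card (x \<inter> y) = Suc s") auto
    then show "real (card (x \<inter> y) choose i) * f y = dl x y * f y"
      using int_card_eq[OF x y] True by (simp add: dl_def)
  qed
  also have "\<dots> = f x" using x by (simp add: dl_sum)
  finally show ?thesis using True by simp
next
  case False
  then have i': "i \<le> s" using i by simp
  have "(\<Sum>y\<in>L n (Suc s). real (card (x \<inter> y) choose i) * f y) =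
        (\<Sum>y\<in>L n (Suc s). (\<Sum>z\<in>L n i. inc x z * inc y z) * f y)"
  proof (rule sum.cong[OF refl])
    fix y assume y: "y \<in> L n (Suc s)"
    have "{z \<in> L n i. z \<subseteq> x \<inter> y} = {z. z \<subseteq> x \<inter> y \<and> card z = i}"
      using x by (auto simp: L_def)
    moreover have "card {z. z \<subseteq> x \<inter> y \<and> card z = i} = card (x \<inter> y) choose i"
      by (rule n_subsets) (use x L_finite_elem in blast)
    ultimately show "real (card (x \<inter> y) choose i) * f y = (\<Sum>z\<in>L n i. inc x z * inc y z) * f y"
      by (simp add: sum_inc_inc2)
  qed
  also have "\<dots> = (\<Sum>y\<in>L n (Suc s). \<Sum>z\<in>L n i. inc x z * (inc y z * f y))"
    by (simp add: sum_distrib_right sum_distrib_left mult_ac)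
  also have "\<dots> = (\<Sum>z\<in>L n i. \<Sum>y\<in>L n (Suc s). inc x z * (inc y z * f y))"
    by (rule sum.swap)
  also have "\<dots> = (\<Sum>z\<in>L n i. inc x z * (\<Sum>y\<in>L n (Suc s). inc y z * f y))"
    by (simp add: sum_distrib_left)
  also have "\<dots> = 0"
  proof (rule sum.neutral, rule ballI)
    fix z assume z: "z \<in> L n i"
    have "z \<in> L n (s - (s - i))" using z i' by simp
    then show "inc x z * (\<Sum>y\<in>L n (Suc s). inc y z * f y) = 0"
      using vanish[OF hD, of "s - i" z] by simp
  qed
  finally show ?thesis using False by simp
qed

lemma binom_interp:
  fixes \<omega> :: "nat \<Rightarrow> real"
  shows "\<exists>\<beta>. \<forall>j\<le>t. \<omega> j = (\<Sum>i\<le>j. \<beta> i * real (j choose i))"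
proof (induction t)
  case 0
  show ?case by (intro exI[of _ "\<lambda>_. \<omega> 0"]) simp
next
  case (Suc t)
  then obtain \<beta> where b: "\<forall>j\<le>t. \<omega> j = (\<Sum>i\<le>j. \<beta> i * real (j choose i))" by blast
  define \<beta>' where "\<beta>' = \<beta>(Suc t := \<omega> (Suc t) - (\<Sum>i\<le>t. \<beta> i * real (Suc t choose i)))"
  have "\<omega> j = (\<Sum>i\<le>j. \<beta>' i * real (j choose i))" if "j \<le> Suc t" for j
  proof (cases "j = Suc t")
    case True
    have "(\<Sum>i\<le>t. \<beta>' i * real (Suc t choose i)) = (\<Sum>i\<le>t. \<beta> i * real (Suc t choose i))"
      by (rule sum.cong) (auto simp: \<beta>'_def)
    then show ?thesis using True by (simp add: \<beta>'_def)
  next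
    case False
    then have "j \<le> t" using that by simp
    then have "(\<Sum>i\<le>j. \<beta>' i * real (j choose i)) = (\<Sum>i\<le>j. \<beta> i * real (j choose i))"
      by (intro sum.cong) (auto simp: \<beta>'_def)
    then show ?thesis using b \<open>j \<le> t\<close> by simp
  qed
  then show ?case by blast
qed

lemma sum_choose_extend:
  fixes \<beta> :: "nat \<Rightarrow> real"
  assumes "j \<le> t"
  shows "(\<Sum>i\<le>j. \<beta> i * real (j choose i)) = (\<Sum>i\<le>t. \<beta> i * real (j choose i))"
  by (rule sum.mono_neutral_left) (use assms in auto)

lemma Kq_eigen:
  "\<exists>\<mu>. \<forall>f. (\<forall>w\<in>L n s. (\<Sum>y\<in>L n (Suc s). inc y w * f y) = 0) \<longrightarrow>
        (\<forall>x\<in>L n (Suc s). (\<Sum>x'\<in>L n (Suc s). Kker n (Qcyc n k) x x' * f x') = \<mu> * f x)"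
proof -
  let ?t = "Suc s"
  let ?K = "Kker n (Qcyc n k)"
  define pj where "pj j = (SOME p. fst p \<in> L n ?t \<and> snd p \<in> L n ?t \<and> card (fst p \<inter> snd p) = j)" for j
  define \<omega> where "\<omega> j = ?K (fst (pj j)) (snd (pj j))" for j
  have Kw: "?K x y = \<omega> (card (x \<inter> y))" if "x \<in> L n ?t" "y \<in> L n ?t" for x y
  proof -
    let ?j = "card (x \<inter> y)"
    have "\<exists>p. fst p \<in> L n ?t \<and> snd p \<in> L n ?t \<and> card (fst p \<inter> snd p) = ?j"
      using that by (intro exI[of _ "(x, y)"]) simp
    then have "fst (pj ?j) \<in> L n ?t \<and> snd (pj ?j) \<in> L n ?t \<and> card (fst (pj ?j) \<inter> snd (pj ?j)) = ?j"
      unfolding pj_def by (rule someI_ex)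
    then show ?thesis unfolding \<omega>_def using Kq_const that by metis
  qed
  obtain \<beta> where b: "\<forall>j\<le>?t. \<omega> j = (\<Sum>i\<le>j. \<beta> i * real (j choose i))"
    using binom_interp by blast
  show ?thesis
  proof (intro exI[of _ "\<beta> ?t"] allI impI ballI)
    fix f x
    assume hD: "\<forall>w\<in>L n s. (\<Sum>y\<in>L n (Suc s). inc y w * f y) = 0" and x: "x \<in> L n ?t"
    have "(\<Sum>x'\<in>L n ?t. ?K x x' * f x') = (\<Sum>x'\<in>L n ?t. (\<Sum>i\<le>?t. \<beta> i * real (card (x \<inter> x') choose i)) * f x')"
    proof (rule sum.cong[OF refl])
      fix x' assume x': "x' \<in> L n ?t"
      have le: "card (x \<inter> x') \<le> ?t" using int_card_le[OF x] .
      show "?K x x' * f x' = (\<Sum>i\<le>?t. \<beta> i * real (card (x \<inter> x') choose i)) * f x'"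
        using Kw[OF x x'] b le sum_choose_extend[OF le, of \<beta>] by simp
    qed
    also have "\<dots> = (\<Sum>x'\<in>L n ?t. \<Sum>i\<le>?t. \<beta> i * (real (card (x \<inter> x') choose i) * f x'))"
      by (simp only: sum_distrib_right mult.assoc)
    also have "\<dots> = (\<Sum>i\<le>?t. \<Sum>x'\<in>L n ?t. \<beta> i * (real (card (x \<inter> x') choose i) * f x'))"
      by (rule sum.swap)
    also have "\<dots> = (\<Sum>i\<le>?t. \<beta> i * (\<Sum>x'\<in>L n ?t. real (card (x \<inter> x') choose i) * f x'))"
      by (simp add: sum_distrib_left)
    also have "\<dots> = (\<Sum>i\<le>?t. \<beta> i * (if i = ?t then f x else 0))"
      by (rule sum.cong[OF refl]) (use lemmaZ[of n s f x] hD x in auto)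
    also have "\<dots> = \<beta> ?t * f x"
      by (simp add: if_distrib[of "\<lambda>c. _ * c"] sum.delta cong: if_cong)
    finally show "(\<Sum>x'\<in>L n ?t. ?K x x' * f x') = \<beta> ?t * f x" .
  qed
qed



lemma cyc_fix:
  fixes cs :: "nat list"
  assumes d: "distinct cs" and ne: "cs \<noteq> []"
  shows "cycle_of_list cs ` x = x \<longleftrightarrow> (x \<inter> set cs = {} \<or> set cs \<subseteq> x)"
proof
  let ?c = "cycle_of_list cs"
  let ?k = "length cs"
  assume fx: "?c ` x = x"
  have pw: "(?c ^^ m) ` x = x" for m
  proof (induction m)
    case (Suc m)
    have "(?c ^^ Suc m) ` x = ?c ` ((?c ^^ m) ` x)" by (simp add: image_comp)
    then show ?case using Suc fx by simp
  qed simp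
  show "x \<inter> set cs = {} \<or> set cs \<subseteq> x"
  proof (cases "x \<inter> set cs = {}")
    case True then show ?thesis by simp
  next
    case False
    then obtain e where e: "e \<in> x" "e \<in> set cs" by blast
    then obtain i where i: "i < ?k" "cs ! i = e" by (auto simp: in_set_conv_nth)
    have "set cs \<subseteq> x"
    proof
      fix e' assume "e' \<in> set cs"
      then obtain j where j: "j < ?k" "cs ! j = e'" by (auto simp: in_set_conv_nth)
      define m where "m = j + ?k - i"
      have "(?c ^^ m) (cs ! i) = map (?c ^^ m) cs ! i" using i by simp
      also have "\<dots> = rotate m cs ! i" using cyclic_rotation[OF d] by simp
      also have "\<dots> = cs ! ((m + i) mod ?k)" using i by (simp add: nth_rotate)
      also have "(m + i) mod ?k = j"
      proof -
        have "m + i = j + ?k" using i unfolding m_def by simp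
        then show ?thesis using j by simp
      qed
      finally have "(?c ^^ m) e = e'" using i j by simp
      moreover have "(?c ^^ m) e \<in> x" using pw[of m] e(1) by blast
      ultimately show "e' \<in> x" by simp
    qed
    then show ?thesis by simp
  qed
next
  let ?c = "cycle_of_list cs"
  assume "x \<inter> set cs = {} \<or> set cs \<subseteq> x"
  then show "?c ` x = x"
  proof
    assume h: "x \<inter> set cs = {}"
    have "?c ` x = (\<lambda>z. z) ` x"
    proof (rule image_cong[OF refl])
      fix z assume "z \<in> x"
      then have "z \<notin> set cs" using h by blast
      then show "?c z = z" by (rule id_outside_supp)
    qed
    then show ?thesis by simp
  next
    assume S: "set cs \<subseteq> x"
    have xs: "x = set cs \<union> (x - set cs)" using S by blast
    have "?c ` x = ?c ` set cs \<union> ?c ` (x - set cs)" by (subst xs) (rule image_Un)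
    also have "?c ` set cs = set cs" using cycle_is_surj[OF d] .
    also have "?c ` (x - set cs) = (\<lambda>z. z) ` (x - set cs)"
    proof (rule image_cong[OF refl])
      fix z assume "z \<in> x - set cs"
      then have "z \<notin> set cs" by blast
      then show "?c z = z" by (rule id_outside_supp)
    qed
    finally show ?thesis using xs by simp
  qed
qed

definition psi :: "nat \<Rightarrow> nat \<Rightarrow> nat \<Rightarrow> real" where
  "psi n k t = real ((n - k) choose t) + real ((n - k) choose (n - t))"

lemma cyc_fix_count:
  fixes cs :: "nat list"
  assumes d: "distinct cs" "length cs = k" "set cs \<subseteq> {1..n}" "k \<ge> 1" "t \<le> n"
  shows "real (card {x \<in> L n t. cycle_of_list cs ` x = x}) = psi n k t"
proof -
  let ?S = "set cs"
  have ne: "cs \<noteq> []" using d by auto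
  have cS: "card ?S = k" using d distinct_card by blast
  have eq: "{x \<in> L n t. cycle_of_list cs ` x = x} = {x \<in> L n t. x \<inter> ?S = {}} \<union> {x \<in> L n t. ?S \<subseteq> x}"
    by (auto simp add: cyc_fix[OF d(1) ne])
  have Sne: "?S \<noteq> {}" using ne by simp
  have disj: "{x \<in> L n t. x \<inter> ?S = {}} \<inter> {x \<in> L n t. ?S \<subseteq> x} = {}"
  proof -
    have False if "?S \<subseteq> x" "x \<inter> ?S = {}" for x using that Sne by (simp add: Int_absorb1)
    then show ?thesis by blast
  qed
  have c1: "card {x \<in> L n t. x \<inter> ?S = {}} = (n - k) choose t"
  proof -
    have "{x \<in> L n t. x \<inter> ?S = {}} = {x. x \<subseteq> {1..n} - ?S \<and> card x = t}" by (auto simp: L_def)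
    moreover have "card {x. x \<subseteq> {1..n} - ?S \<and> card x = t} = card ({1..n} - ?S) choose t"
      by (rule n_subsets) simp
    moreover have "card ({1..n} - ?S) = n - k" using d(3) cS by (simp add: card_Diff_subset)
    ultimately show ?thesis by simp
  qed
  have c2: "card {x \<in> L n t. ?S \<subseteq> x} = (n - k) choose (n - t)"
  proof -
    have e2: "{x \<in> L n t. ?S \<subseteq> x} = {x. x \<subseteq> {1..n} \<and> card x = t \<and> ?S \<subseteq> x}" by (auto simp: L_def)
    show ?thesis
    proof (cases "k \<le> t")
      case True
      have "card {x \<in> L n t. ?S \<subseteq> x} = (n - k) choose (t - k)"
        unfolding e2 using card_supersets[of ?S n t] d(3) cS True by simp
      also have "\<dots> = (n - k) choose ((n - k) - (t - k))"
        by (rule binomial_symmetric) (use d(5) True in simp)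
      also have "(n - k) - (t - k) = n - t" using d(5) True by simp
      finally show ?thesis .
    next
      case False
      have "k \<le> n" using cS d(3) by (metis card_atLeastAtMost card_mono diff_Suc_1 finite_atLeastAtMost)
      then have lt: "(n - k) < (n - t)" using False d(5) by linarith
      have "card {x \<in> L n t. ?S \<subseteq> x} = 0"
        unfolding e2 using supersets_empty[of t ?S n] cS False by simp
      moreover have "(n - k) choose (n - t) = 0" using lt by simp
      ultimately show ?thesis by metis
    qed
  qed
  have "card {x \<in> L n t. cycle_of_list cs ` x = x} = card {x \<in> L n t. x \<inter> ?S = {}} + card {x \<in> L n t. ?S \<subseteq> x}"
    unfolding eq by (rule card_Un_disjoint) (use disj in auto)
  then show ?thesis using c1 c2 by (simp add: psi_def)
qed

lemma trc_K:
  assumes "2 \<le> k" "k \<le> n" "t \<le> n"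
  shows "trc (L n t) (Kker n (Qcyc n k)) = psi n k t"
proof -
  let ?kc = "kcycles n k"
  have "trc (L n t) (Kker n (Qcyc n k)) = (\<Sum>g\<in>Sym n. Qcyc n k g * (\<Sum>x\<in>L n t. dl (g ` x) x))"
    unfolding trc_def Kker_def by (subst sum.swap) (simp add: sum_distrib_left)
  also have "\<dots> = (\<Sum>g\<in>?kc. 1 / real (card ?kc) * psi n k t)"
  proof -
    have "(\<Sum>g\<in>Sym n. Qcyc n k g * (\<Sum>x\<in>L n t. dl (g ` x) x)) =
          (\<Sum>g\<in>?kc. Qcyc n k g * (\<Sum>x\<in>L n t. dl (g ` x) x))"
      by (rule sum.mono_neutral_right) (use kcycles_Sym in \<open>auto simp: Qcyc_def\<close>)
    also have "\<dots> = (\<Sum>g\<in>?kc. 1 / real (card ?kc) * psi n k t)"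
    proof (rule sum.cong[OF refl])
      fix g assume g: "g \<in> ?kc"
      then obtain cs where cs: "distinct cs" "length cs = k" "set cs \<subseteq> {1..n}" "g = cycle_of_list cs"
        by (auto simp: kcycles_def)
      have "(\<Sum>x\<in>L n t. dl (g ` x) x) = (\<Sum>x\<in>L n t. if g ` x = x then 1 else 0)"
        by (rule sum.cong) (auto simp: dl_def)
      also have "\<dots> = real (card (L n t \<inter> {x. g ` x = x}))"
        by (simp only: sum.If_cases finite_L) simp
      also have "L n t \<inter> {x. g ` x = x} = {x \<in> L n t. cycle_of_list cs ` x = x}" using cs(4) by blast
      also have "real (card \<dots>) = psi n k t" using cyc_fix_count[OF cs(1,2,3)] assms by simp
      finally show "Qcyc n k g * (\<Sum>x\<in>L n t. dl (g ` x) x) = 1 / real (card ?kc) * psi n k t"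
        using g by (simp add: Qcyc_def)
    qed
    finally show ?thesis .
  qed
  also have "\<dots> = psi n k t" using kcycles_nonempty[OF assms(2)] by (simp add: card_eq_0_iff)
  finally show ?thesis .
qed

lemma trc_mpow1: "trc S (mpow S A (Suc 0)) = trc S A" if "finite S"
  using that by (intro trc_cong) (simp add: mm_dl_left)

lemma L0: "L n 0 = {{}}"
proof -
  have "x = {}" if "x \<subseteq> {1..n}" "card x = 0" for x :: "nat set"
    using that by (metis card_0_eq finite_atLeastAtMost rev_finite_subset)
  then show ?thesis by (auto simp: L_def)
qed

lemma trc_level0:
  assumes "k \<le> n"
  shows "trc (L n 0) (mpow (L n 0) (Kker n (Qcyc n k)) m) = 1"
proof -
  have K0: "Kker n (Qcyc n k) {} {} = 1"
    unfolding Kker_def using Qcyc_sum[OF assms] by (simp add: dl_def)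
  have "mpow (L n 0) (Kker n (Qcyc n k)) m {} {} = 1"
    by (induction m) (simp_all add: L0 dl_def mm_def K0)
  then show ?thesis by (simp add: trc_def L0)
qed

lemma level_step:
  assumes "2 * s < n"
  shows "\<exists>\<mu>. \<forall>m. trc (L n (Suc s)) (mpow (L n (Suc s)) (Kker n (Qcyc n k)) m) =
      trc (L n s) (mpow (L n s) (Kker n (Qcyc n k)) m) + \<mu> ^ m * (real (n choose Suc s) - real (n choose s))"
proof -
  obtain \<mu> where mu: "\<forall>f. (\<forall>w\<in>L n s. (\<Sum>y\<in>L n (Suc s). inc y w * f y) = 0) \<longrightarrow>
        (\<forall>x\<in>L n (Suc s). (\<Sum>x'\<in>L n (Suc s). Kker n (Qcyc n k) x x' * f x') = \<mu> * f x)"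
    using Kq_eigen by blast
  have "trc (L n (Suc s)) (mpow (L n (Suc s)) (Kker n (Qcyc n k)) m) =
      trc (L n s) (mpow (L n s) (Kker n (Qcyc n k)) m) + \<mu> ^ m * (real (card (L n (Suc s))) - real (card (L n s)))" for m
  proof (rule trace_recursion[where U = inc])
    show "finite (L n (Suc s))" "finite (L n s)" by simp_all
    show "f y = 0" if "\<And>x. x \<in> L n (Suc s) \<Longrightarrow> (\<Sum>y\<in>L n s. inc x y * f y) = 0" "y \<in> L n s" for f y
      using U_inj[OF assms] that by blast
    show "mm (L n (Suc s)) (Kker n (Qcyc n k)) inc x y = mm (L n s) inc (Kker n (Qcyc n k)) x y"
      if "x \<in> L n (Suc s)" "y \<in> L n s" for x y
      using Kker_intertwine that by blast
    show "(\<Sum>x'\<in>L n (Suc s). Kker n (Qcyc n k) x x' * f x') = \<mu> * f x"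
      if "\<And>y. y \<in> L n s \<Longrightarrow> (\<Sum>x\<in>L n (Suc s). inc x y * f x) = 0" "x \<in> L n (Suc s)" for f x
      using mu that by blast
  qed
  then show ?thesis by (intro exI[of _ \<mu>]) (simp add: card_L)
qed



lemma rcomp_bij: "g \<in> Sym n \<Longrightarrow> bij_betw (\<lambda>h. h \<circ> g) (Sym n) (Sym n)"
proof (rule bij_betw_byWitness[where f' = "\<lambda>s. s \<circ> inv g"])
  assume g: "g \<in> Sym n"
  show "\<forall>a\<in>Sym n. a \<circ> g \<circ> inv g = a" using Sym_inv_pt[OF g] by (simp add: fun_eq_iff)
  show "\<forall>a\<in>Sym n. a \<circ> inv g \<circ> g = a" using Sym_inv_pt[OF g] by (simp add: fun_eq_iff)
  show "(\<lambda>h. h \<circ> g) ` Sym n \<subseteq> Sym n" using g by (auto intro: comp_Sym)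
  show "(\<lambda>s. s \<circ> inv g) ` Sym n \<subseteq> Sym n" using g by (auto intro: comp_Sym inv_Sym)
qed

lemma Kker_conv:
  assumes x: "x \<in> L n t"
  shows "Kker n (conv n P R) x y = mm (L n t) (Kker n R) (Kker n P) x y"
proof -
  have "Kker n (conv n P R) x y = (\<Sum>g\<in>Sym n. R g * (\<Sum>s\<in>Sym n. P (s \<circ> inv g) * dl (s ` x) y))"
    unfolding Kker_def conv_def
    by (simp add: sum_distrib_right sum_distrib_left mult_ac) (rule sum.swap)
  also have "\<dots> = (\<Sum>g\<in>Sym n. R g * Kker n P (g ` x) y)"
  proof (rule sum.cong[OF refl])
    fix g assume g: "g \<in> Sym n"
    have "(\<Sum>s\<in>Sym n. P (s \<circ> inv g) * dl (s ` x) y) = (\<Sum>h\<in>Sym n. P (h \<circ> g \<circ> inv g) * dl ((h \<circ> g) ` x) y)"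
      by (rule sum.reindex_bij_betw[OF rcomp_bij[OF g], symmetric])
    also have "\<dots> = Kker n P (g ` x) y"
      unfolding Kker_def using Sym_inv_pt[OF g] by (intro sum.cong refl) (simp add: image_comp o_def)
    finally show "R g * (\<Sum>s\<in>Sym n. P (s \<circ> inv g) * dl (s ` x) y) = R g * Kker n P (g ` x) y" by simp
  qed
  also have "\<dots> = (\<Sum>g\<in>Sym n. R g * (\<Sum>z\<in>L n t. dl (g ` x) z * Kker n P z y))"
    by (rule sum.cong[OF refl]) (simp add: dl_sum image_L x)
  also have "\<dots> = mm (L n t) (Kker n R) (Kker n P) x y"
    unfolding mm_def Kker_def
    by (simp add: sum_distrib_right sum_distrib_left mult_ac) (rule sum.swap)
  finally show ?thesis .
qed

lemma Kker_conv_pow: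
  assumes x: "x \<in> L n t"
  shows "Kker n (conv_pow n P N) x y = mpow (L n t) (Kker n P) N x y"
  using x
proof (induction N arbitrary: x y)
  case 0
  have "Kker n (conv_pow n P 0) x y = (\<Sum>g\<in>Sym n. if g = id then dl (g ` x) y else 0)"
    unfolding Kker_def by (intro sum.cong refl) simp
  also have "\<dots> = dl x y" by (simp add: sum.delta')
  finally show ?case by simp
next
  case (Suc N)
  have "Kker n (conv_pow n P (Suc N)) x y = mm (L n t) (Kker n (conv_pow n P N)) (Kker n P) x y"
    using Kker_conv[OF Suc.prems] by simp
  also have "\<dots> = mm (L n t) (mpow (L n t) (Kker n P) N) (Kker n P) x y"
    by (rule mm_cong) (use Suc in auto)
  finally show ?case by simp
qed

lemma img_bij_L: "\<sigma> \<in> Sym n \<Longrightarrow> bij_betw ((`) \<sigma>) (L n t) (L n t)"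
proof (rule bij_betw_byWitness[where f' = "(`) (inv \<sigma>)"])
  assume s: "\<sigma> \<in> Sym n"
  show "\<forall>a\<in>L n t. inv \<sigma> ` \<sigma> ` a = a" using Sym_inv_img1[OF s] by simp
  show "\<forall>a\<in>L n t. \<sigma> ` inv \<sigma> ` a = a" using Sym_inv_img2[OF s] by simp
  show "(`) \<sigma> ` L n t \<subseteq> L n t" using s image_L by blast
  show "(`) (inv \<sigma>) ` L n t \<subseteq> L n t" using inv_Sym[OF s] image_L by blast
qed

lemma mpow_invariant:
  assumes s: "\<sigma> \<in> Sym n" and K: "\<And>x y. K (\<sigma> ` x) (\<sigma> ` y) = K x y"
  shows "mpow (L n t) K m (\<sigma> ` x) (\<sigma> ` y) = mpow (L n t) K m x y"
proof (induction m arbitrary: y)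
  case 0
  show ?case using Sym_inj[OF s] by (simp add: dl_def inj_image_eq_iff)
next
  case (Suc m)
  have "mpow (L n t) K (Suc m) (\<sigma> ` x) (\<sigma> ` y) = (\<Sum>z\<in>L n t. mpow (L n t) K m (\<sigma> ` x) z * K z (\<sigma> ` y))"
    by (simp add: mm_def)
  also have "\<dots> = (\<Sum>z\<in>L n t. mpow (L n t) K m (\<sigma> ` x) (\<sigma> ` z) * K (\<sigma> ` z) (\<sigma> ` y))"
    by (rule sum.reindex_bij_betw[OF img_bij_L[OF s], symmetric])
  also have "\<dots> = (\<Sum>z\<in>L n t. mpow (L n t) K m x z * K z y)"
    using Suc K by simp
  finally show ?case by (simp add: mm_def)
qed

lemma mpow_Kq_invariant:
  "\<sigma> \<in> Sym n \<Longrightarrow> mpow (L n t) (Kker n (Qcyc n k)) m (\<sigma> ` x) (\<sigma> ` y) = mpow (L n t) (Kker n (Qcyc n k)) m x y"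
  by (rule mpow_invariant) (simp_all add: Kq_invariant)

lemma mpow_sym:
  assumes "x \<in> L n t" "y \<in> L n t"
  shows "mpow (L n t) (Kker n (Qcyc n k)) m x y = mpow (L n t) (Kker n (Qcyc n k)) m y x"
proof -
  obtain \<sigma> where "\<sigma> \<in> Sym n" "\<sigma> ` x = y" "\<sigma> ` y = x"
    using transport[of x n y y x] assms by (auto simp: L_def Int_commute)
  then show ?thesis using mpow_Kq_invariant by metis
qed

lemma mpow_diag:
  assumes "x \<in> L n t" "x0 \<in> L n t"
  shows "mpow (L n t) (Kker n (Qcyc n k)) m x x = mpow (L n t) (Kker n (Qcyc n k)) m x0 x0"
proof -
  obtain \<sigma> where "\<sigma> \<in> Sym n" "\<sigma> ` x0 = x"
    using transport[of x0 n x0 x x] assms by (auto simp: L_def)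
  then show ?thesis using mpow_Kq_invariant by metis
qed

lemma mpow_rowsum:
  assumes "finite S" and K: "\<And>x. x \<in> S \<Longrightarrow> (\<Sum>y\<in>S. K x y) = 1"
  shows "x \<in> S \<Longrightarrow> (\<Sum>y\<in>S. mpow S K m x y) = 1"
proof (induction m arbitrary: x)
  case 0
  then show ?case using assms(1) by (simp add: dl_sum1)
next
  case (Suc m)
  have "(\<Sum>y\<in>S. mpow S K (Suc m) x y) = (\<Sum>z\<in>S. mpow S K m x z * (\<Sum>y\<in>S. K z y))"
    by (simp add: mm_def sum_distrib_left) (rule sum.swap)
  also have "\<dots> = (\<Sum>z\<in>S. mpow S K m x z)" using K by simp
  finally show ?case using Suc by simp
qed

lemma tab_bij:
  assumes "a + b = n"
  shows "bij_betw snd (tabloids n a b) (L n b)"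
proof (rule bij_betw_byWitness[where f' = "\<lambda>B. ({1..n} - B, B)"])
  show "\<forall>p\<in>tabloids n a b. ({1..n} - snd p, snd p) = p"
    by (auto simp: tabloids_def)
  show "\<forall>B\<in>L n b. snd ({1..n} - B, B) = B" by simp
  show "snd ` tabloids n a b \<subseteq> L n b" by (auto simp: tabloids_def L_def)
  show "(\<lambda>B. ({1..n} - B, B)) ` L n b \<subseteq> tabloids n a b"
  proof safe
    fix B assume B: "B \<in> L n b"
    have "card ({1..n} - B) = n - b" using B L_finite_elem[OF B] by (auto simp: L_def card_Diff_subset)
    then show "({1..n} - B, B) \<in> tabloids n a b" using B assms by (auto simp: tabloids_def L_def)
  qed
qed

lemma act_vec_eq:
  assumes x0: "x0 \<in> tabloids n a b" and x: "x \<in> tabloids n a b"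
  shows "act_vec n P x0 x = Kker n P (snd x0) (snd x)"
proof -
  obtain A0 B0 where p0: "x0 = (A0, B0)" by (cases x0)
  obtain A B where p: "x = (A, B)" by (cases x)
  have A0: "A0 = {1..n} - B0" using x0 p0 by (auto simp: tabloids_def)
  have A: "A = {1..n} - B" using x p by (auto simp: tabloids_def)
  have iff: "act g x0 = x \<longleftrightarrow> g ` B0 = B" if g: "g \<in> Sym n" for g
  proof -
    have "g ` A0 = g ` {1..n} - g ` B0" unfolding A0 using Sym_inj[OF g] by (simp add: image_set_diff)
    also have "g ` {1..n} = {1..n}" using Sym_permutes[OF g] by (rule permutes_image)
    finally show ?thesis using A p p0 by (auto simp: act_def)
  qed
  have "act_vec n P x0 x = (\<Sum>g\<in>Sym n. if act g x0 = x then P g else 0)"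
    unfolding act_vec_def by (simp add: sum.If_cases Int_def)
  also have "\<dots> = (\<Sum>g\<in>Sym n. P g * dl (g ` B0) B)"
    by (rule sum.cong[OF refl]) (simp add: iff dl_def)
  finally show ?thesis using p p0 by (simp add: Kker_def)
qed

lemma d_pos:
  assumes "1 \<le> j" "2 * j \<le> n"
  shows "real (n choose j) - real (n choose (j - 1)) > 0"
proof -
  obtain a where a: "j = Suc a" using assms(1) by (cases j) auto
  define b where "b = n - j"
  have nab: "n = Suc (a + b)" using assms a b_def by simp
  have e: "Suc a * (n choose j) = Suc b * (n choose a)"
    using Suc_times_binomial_add[of a b] nab a by simp
  have "b \<ge> Suc a" using assms a b_def by simp
  moreover have "n choose a > 0" using nab by simp
  ultimately have "Suc b * (n choose a) > Suc a * (n choose a)" by simp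
  then have "Suc a * (n choose j) > Suc a * (n choose a)" using e by simp
  then have "n choose j > n choose a" by (meson mult_less_cancel1)
  then show ?thesis using a by simp
qed



definition dd :: "nat \<Rightarrow> nat \<Rightarrow> real" where
  "dd n j = real (n choose j) - real (n choose (j - 1))"

definition mu :: "nat \<Rightarrow> nat \<Rightarrow> nat \<Rightarrow> real" where
  "mu n k j = (SOME \<mu>. \<forall>m. trc (L n j) (mpow (L n j) (Kker n (Qcyc n k)) m) =
      trc (L n (j - 1)) (mpow (L n (j - 1)) (Kker n (Qcyc n k)) m) + \<mu> ^ m * dd n j)"

lemma mu_prop:
  assumes "1 \<le> j" "2 * (j - 1) < n"
  shows "trc (L n j) (mpow (L n j) (Kker n (Qcyc n k)) m) =
      trc (L n (j - 1)) (mpow (L n (j - 1)) (Kker n (Qcyc n k)) m) + mu n k j ^ m * dd n j"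
proof -
  obtain s where s: "j = Suc s" using assms(1) by (cases j) auto
  have "\<exists>\<mu>. \<forall>m. trc (L n j) (mpow (L n j) (Kker n (Qcyc n k)) m) =
      trc (L n (j - 1)) (mpow (L n (j - 1)) (Kker n (Qcyc n k)) m) + \<mu> ^ m * dd n j"
    using level_step[of s n k] assms s by (simp add: dd_def)
  then have "\<forall>m. trc (L n j) (mpow (L n j) (Kker n (Qcyc n k)) m) =
      trc (L n (j - 1)) (mpow (L n (j - 1)) (Kker n (Qcyc n k)) m) + mu n k j ^ m * dd n j"
    unfolding mu_def by (rule someI_ex)
  then show ?thesis by blast
qed

lemma trc_formula:
  assumes "2 * t \<le> n" "k \<le> n"
  shows "trc (L n t) (mpow (L n t) (Kker n (Qcyc n k)) m) = 1 + (\<Sum>j=1..t. mu n k j ^ m * dd n j)"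
  using assms(1)
proof (induction t)
  case 0
  then show ?case using trc_level0[OF assms(2)] by simp
next
  case (Suc t)
  have "trc (L n (Suc t)) (mpow (L n (Suc t)) (Kker n (Qcyc n k)) m) =
      trc (L n t) (mpow (L n t) (Kker n (Qcyc n k)) m) + mu n k (Suc t) ^ m * dd n (Suc t)"
    using mu_prop[of "Suc t" n k m] Suc.prems by simp
  then show ?case using Suc by simp
qed

lemma mu_dd:
  assumes "1 \<le> j" "2 * j \<le> n" "2 \<le> k" "k \<le> n"
  shows "mu n k j * dd n j = psi n k j - psi n k (j - 1)"
proof -
  have "trc (L n j) (mpow (L n j) (Kker n (Qcyc n k)) (Suc 0)) =
      trc (L n (j - 1)) (mpow (L n (j - 1)) (Kker n (Qcyc n k)) (Suc 0)) + mu n k j ^ (Suc 0) * dd n j"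
    using mu_prop[of j n k "Suc 0"] assms by simp
  then have "trc (L n j) (Kker n (Qcyc n k)) = trc (L n (j - 1)) (Kker n (Qcyc n k)) + mu n k j * dd n j"
    by (metis trc_mpow1 finite_L power_one_right One_nat_def)
  moreover have "trc (L n j) (Kker n (Qcyc n k)) = psi n k j" using trc_K assms by simp
  moreover have "trc (L n (j - 1)) (Kker n (Qcyc n k)) = psi n k (j - 1)" using trc_K assms by simp
  ultimately show ?thesis by simp
qed



theorem corollary3p14:
  fixes a b n k N :: nat and x0 :: "nat set \<times> nat set"
  assumes "a \<ge> b" "b \<ge> 1" "a + b = n" "2 \<le> k" "k \<le> n" "N \<ge> 1"
    and "x0 \<in> tabloids n a b"
  shows "(tv_unif (tabloids n a b) (act_vec n (conv_pow n (Qcyc n k) N) x0))\<^sup>2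
    \<le> (1/4) * (\<Sum>t=1..b.
        (((real ((n-k) choose (n-t)) - real ((n-k) choose (n+1-t)))
          + (real ((n-k) choose t) - real ((n-k) choose (t-1)))) ^ (2*N))
        / ((real (n choose t) - real (n choose (t-1))) ^ (2*N-1)))"
proof -
  let ?T = "tabloids n a b"
  let ?Y = "L n b"
  let ?K = "Kker n (Qcyc n k)"
  let ?M = "mpow ?Y ?K N"
  define B0 where "B0 = snd x0"
  define c where "c = real (card ?Y)"
  have bij: "bij_betw snd ?T ?Y" using tab_bij assms(3) by blast
  have B0: "B0 \<in> ?Y" using bij assms(7) unfolding B0_def by (meson bij_betwE)
  have cT: "card ?T = card ?Y" using bij by (rule bij_betw_same_card)
  have b2: "2 * b \<le> n" using assms by simp
  have cpos: "c > 0" unfolding c_def card_L using assms by simp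
  have v: "act_vec n (conv_pow n (Qcyc n k) N) x0 x = ?M B0 (snd x)" if "x \<in> ?T" for x
    using act_vec_eq[OF assms(7) that] Kker_conv_pow[OF B0] unfolding B0_def by simp
  define w where "w y = ?M B0 y - 1 / c" for y
  have tv: "tv_unif ?T (act_vec n (conv_pow n (Qcyc n k) N) x0) = (1/2) * (\<Sum>y\<in>?Y. \<bar>w y\<bar>)"
  proof -
    have "(\<Sum>x\<in>?T. \<bar>act_vec n (conv_pow n (Qcyc n k) N) x0 x - 1 / real (card ?T)\<bar>) =
          (\<Sum>x\<in>?T. \<bar>w (snd x)\<bar>)"
      by (rule sum.cong[OF refl]) (simp add: v w_def c_def cT)
    also have "\<dots> = (\<Sum>y\<in>?Y. \<bar>w y\<bar>)" by (rule sum.reindex_bij_betw[OF bij])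
    finally show ?thesis unfolding tv_unif_def by simp
  qed
  have rows: "(\<Sum>y\<in>?Y. ?M B0 y) = 1"
    using mpow_rowsum[of ?Y ?K, OF finite_L _ B0] Kker_rowsum Qcyc_sum assms(5) by blast
  have sqw: "(\<Sum>y\<in>?Y. (w y)^2) = (\<Sum>y\<in>?Y. (?M B0 y)^2) - 1 / c"
  proof -
    have "(\<Sum>y\<in>?Y. (w y)^2) = (\<Sum>y\<in>?Y. (?M B0 y)^2) - 2 / c * (\<Sum>y\<in>?Y. ?M B0 y) + c * (1 / c)^2"
      unfolding w_def power2_diff by (simp add: sum.distrib sum_subtractf sum_distrib_left c_def)
    also have "\<dots> = (\<Sum>y\<in>?Y. (?M B0 y)^2) - 1 / c" using rows cpos by (simp add: power2_eq_square)
    finally show ?thesis .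
  qed
  have sqM: "c * (\<Sum>y\<in>?Y. (?M B0 y)^2) = trc ?Y (mpow ?Y ?K (N + N))"
  proof -
    have "(\<Sum>y\<in>?Y. (?M B0 y)^2) = mm ?Y ?M ?M B0 B0"
      unfolding mm_def power2_eq_square
      by (rule sum.cong[OF refl]) (use mpow_sym B0 in metis)
    also have "\<dots> = mpow ?Y ?K (N + N) B0 B0" using mpow_add[OF finite_L B0] by simp
    finally have e: "(\<Sum>y\<in>?Y. (?M B0 y)^2) = mpow ?Y ?K (N + N) B0 B0" .
    have "trc ?Y (mpow ?Y ?K (N + N)) = (\<Sum>x\<in>?Y. mpow ?Y ?K (N + N) B0 B0)"
      unfolding trc_def by (rule sum.cong[OF refl]) (use mpow_diag B0 in blast)
    also have "\<dots> = c * mpow ?Y ?K (N + N) B0 B0" by (simp add: c_def)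
    finally show ?thesis using e by simp
  qed
  have tr: "trc ?Y (mpow ?Y ?K (N + N)) = 1 + (\<Sum>j=1..b. mu n k j ^ (N + N) * dd n j)"
    using trc_formula[OF b2 assms(5)] by blast
  have "(tv_unif ?T (act_vec n (conv_pow n (Qcyc n k) N) x0))\<^sup>2 = (1/4) * (\<Sum>y\<in>?Y. \<bar>w y\<bar>)^2"
    unfolding tv by (simp add: power2_eq_square)
  also have "\<dots> \<le> (1/4) * ((\<Sum>y\<in>?Y. \<bar>w y\<bar>^2) * c)"
    using sum_squared_le_sum_of_squares[of "\<lambda>y. \<bar>w y\<bar>" ?Y] unfolding c_def by simp
  also have "\<dots> = (1/4) * (c * (\<Sum>y\<in>?Y. (?M B0 y)^2) - 1)"
  proof -
    have "c * (\<Sum>y\<in>?Y. (w y)^2) = c * (\<Sum>y\<in>?Y. (?M B0 y)^2) - c * (1 / c)"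
      using sqw by (simp add: right_diff_distrib)
    also have "c * (1 / c) = 1" using cpos by simp
    finally show ?thesis by (simp add: mult.commute)
  qed
  also have "\<dots> = (1/4) * (\<Sum>j=1..b. mu n k j ^ (N + N) * dd n j)"
    using sqM tr by simp
  also have "(\<Sum>j=1..b. mu n k j ^ (N + N) * dd n j) = (\<Sum>t=1..b.
        (((real ((n-k) choose (n-t)) - real ((n-k) choose (n+1-t)))
          + (real ((n-k) choose t) - real ((n-k) choose (t-1)))) ^ (2*N))
        / ((real (n choose t) - real (n choose (t-1))) ^ (2*N-1)))"
  proof (rule sum.cong[OF refl])
    fix t assume t: "t \<in> {1..b}"
    have t1: "1 \<le> t" "2 * t \<le> n" using t b2 by auto
    have ddp: "dd n t > 0" using d_pos[OF t1] by (simp add: dd_def)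
    have num: "((real ((n-k) choose (n-t)) - real ((n-k) choose (n+1-t)))
          + (real ((n-k) choose t) - real ((n-k) choose (t-1)))) = mu n k t * dd n t"
    proof -
      have "n - (t - 1) = n + 1 - t" using t1 by simp
      then show ?thesis using mu_dd[OF t1 assms(4,5)] by (simp add: psi_def)
    qed
    have N2: "2 * N = Suc (2 * N - 1)" using assms(6) by simp
    have "(mu n k t * dd n t) ^ (2 * N) / dd n t ^ (2 * N - 1) = mu n k t ^ (2 * N) * dd n t"
    proof -
      have "(mu n k t * dd n t) ^ (2 * N) = mu n k t ^ (2 * N) * dd n t * dd n t ^ (2 * N - 1)"
      proof -
        have e1: "dd n t ^ (2*N) = dd n t * dd n t ^ (2*N-1)" by (metis N2 power_Suc)
        show ?thesis by (simp only: power_mult_distrib e1 mult.assoc)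
      qed
      then show ?thesis using ddp by simp
    qed
    then show "mu n k t ^ (N + N) * dd n t = (((real ((n-k) choose (n-t)) - real ((n-k) choose (n+1-t)))
          + (real ((n-k) choose t) - real ((n-k) choose (t-1)))) ^ (2*N))
        / ((real (n choose t) - real (n choose (t-1))) ^ (2*N-1))"
      using num by (simp add: dd_def mult_2)
  qed
  finally show ?thesis .
qed


end
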